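(* Let $(H,\cdot,1,\Delta,\epsilon,S,\rightharpoonup)$ be a Yetter--Drinfeld post-Hopf algebra with subadjacent Hopf algebra $H_\rightharpoonup=(H,\bullet_\rightharpoonup,1,\Delta,\epsilon,S_\rightharpoonup)$, and regard $(H,\cdot,1,\Delta,\epsilon,S)$ as a Hopf monoid in ${}^{H_\rightharpoonup}_{H_\rightharpoonup}\mathcal{YD}$ with action $\rightharpoonup$ and coaction $a\mapsto a_1\bullet_\rightharpoonup S_\rightharpoonup(a_3)\otimes a_2$. Then the identity map $\mathrm{Id}_H:H\to H_\rightharpoonup$ is a Yetter--Drinfeld relative Rota--Baxter operator on $H_\rightharpoonup$ with respect to $(H,\rightharpoonup)$. Moreover, if $g:(H,\rightharpoonup)\to(H',\rightharpoonup')$ is a morphism of Yetter--Drinfeld post-Hopf algebras, then $(g:H_\rightharpoonup\to H'_{\rightharpoonup'},\,g:H\to H')$ is a morphism of Yetter--Drinfeld relative Rota--Baxter operators from $\mathrm{Id}_H$ to $\mathrm{Id}_{H'}$. This yields a functor $L:\mathcal{YD}\mathrm{PH}(\mathrm{Vec}_\Bbbk)\to\mathcal{YD}\mathrm{rRB}(\mathrm{Vec}_\Bbbk)$.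
   Context: Conventions: $\Bbbk$ is a field; algebras are associative unital, coalgebras coassociative counital; Sweedler notation $\Delta(c)=c_1\otimes c_2$ (summation omitted), iterated as $c_1\otimes c_2\otimes c_3$ etc.; $H\otimes H$ carries the tensor product coalgebra structure. Definition (Yetter--Drinfeld post-Hopf algebra). A tuple $(H,\cdot,1,\Delta,\epsilon,S,\rightharpoonup)$ where $(H,\cdot,1)$ is an algebra, $(H,\Delta,\epsilon)$ is a coalgebra on the same vector space, $S:H\to H$ is linear with $x_1\cdot S(x_2)=S(x_1)\cdot x_2=\epsilon(x)1$ for all $x$, and $\rightharpoonup:H\otimes H\to H$ is a coalgebra morphism, such that for all $x,y,z\in H$: (P1) $x\rightharpoonup(y\cdot z)=(x_1\rightharpoonup y)\cdot(x_2\rightharpoonup z)$; (P2) $x\rightharpoonup(y\rightharpoonup z)=\big(x_1\cdot(x_2\rightharpoonup y)\big)\rightharpoonup z$; (P3) the map $\alpha_\rightharpoonup:H\to\mathrm{End}(H)$, $\alpha_\rightharpoonup(x)(y)=x\rightharpoonup y$, is convolution invertible, i.e. there is $\beta_\rightharpoonup:H\to\mathrm{End}(H)$ with $\alpha_\rightharpoonup(x_1)\circ\beta_\rightharpoonup(x_2)=\beta_\rightharpoonup(x_1)\circ\alpha_\rightharpoonup(x_2)=\epsilon(x)\mathrm{Id}_H$; (P4) $\epsilon(a\cdot b)=\epsilon(a)\epsilon(b)$, $\epsilon(1)=1_\Bbbk$, $\Delta(1)=1\otimes 1$; (P5) $\Delta(x\cdot y)=\Big(x_1\cdot\alpha_\rightharpoonup(x_2)\big(\beta_\rightharpoonup(x_4)(y_1)\big)\Big)\otimes(x_3\cdot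 y_2)$; (P6) setting $x\bullet_\rightharpoonup y:=x_1\cdot(x_2\rightharpoonup y)$, $S_\rightharpoonup(x):=\beta_\rightharpoonup(x_1)(S(x_2))$ and $x\leftharpoonup y:=\big(S_\rightharpoonup(x_1\rightharpoonup y_1)\bullet_\rightharpoonup x_2\big)\bullet_\rightharpoonup y_2$, one has $\Delta(S_\rightharpoonup(x))=S_\rightharpoonup(x_2)\otimes S_\rightharpoonup(x_1)$ and $(x_1\rightharpoonup y_1)\otimes(x_2\leftharpoonup y_2)=(x_2\rightharpoonup y_2)\otimes(x_1\leftharpoonup y_1)$. A morphism of Yetter--Drinfeld post-Hopf algebras $(H,\rightharpoonup)\to(H',\rightharpoonup')$ is an algebra and coalgebra morphism $g$ with $g(x\rightharpoonup y)=g(x)\rightharpoonup' g(y)$; these form $\mathcal{YD}\mathrm{PH}(\mathrm{Vec}_\Bbbk)$. Facts: $H_\rightharpoonup$ is a Hopf algebra and, with the stated action and coaction, $(H,\cdot,1,\Delta,\epsilon,S)$ is a Hopf monoid in ${}^{H_\rightharpoonup}_{H_\rightharpoonup}\mathcal{YD}$. Yetter--Drinfeld modules: for a Hopf algebra $A$ with antipode $T$, a left-left Yetter--Drinfeld module is a left $A$-module $(V,\triangleright)$ and left $A$-comodule $\rho(v)=v_{-1}\otimes v_0$ with $\rho(a\triangleright v)=a_1v_{-1}T(a_3)\otimes a_2\triangleright v_0$; these form the braided monoidal category ${}^A_A\mathcal{YD}$ with braiding $\sigma(v\otimes w)=v_{-1}\triangleright w\otimes v_0$. A bimonoid in ${}^A_A\mathcal{YD}$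 is an object with algebra and coalgebra structure maps in ${}^A_A\mathcal{YD}$, $\epsilon$ multiplicative, $\epsilon(1)=1$, $\Delta(1)=1\otimes1$, and $\Delta\circ m=(m\otimes m)(\mathrm{Id}\otimes\sigma\otimes\mathrm{Id})(\Delta\otimes\Delta)$; a Hopf monoid is a bimonoid with antipode. Definition (Yetter--Drinfeld relative (pre-)Rota--Baxter operator). Let $(H,\cdot,1,\Delta,\epsilon,S_H)$ be a Hopf algebra and $(K,\cdot_K,1_K,\Delta,\epsilon)$ a bimonoid in ${}^H_H\mathcal{YD}$ with $H$-action $\rightharpoonup$. A coalgebra morphism $R:K\to H$ is a Yetter--Drinfeld relative pre-Rota--Baxter operator if for all $a,b\in K$: (RB1) $R(a)\cdot R(b)=R\big(a_1\cdot_K(R(a_2)\rightharpoonup b)\big)$; (RB2) $S_HR(R(a_1)\rightharpoonup b_1)\cdot R(a_2)\cdot R(b_2)\otimes R(R(a_3)\rightharpoonup b_3)=S_HR(R(a_2)\rightharpoonup b_2)\cdot R(a_3)\cdot R(b_3)\otimes R(R(a_1)\rightharpoonup b_1)$. It is a Yetter--Drinfeld relative Rota--Baxter operator if moreover $R$ is bijective and (RB3) $\big(a_1\rightharpoonup R^{-1}S_H(a_2)\big)\cdot_K R^{-1}(a_3)=\epsilon(a)1_K$ for all $a\in H$. A morphism from $R:K\to H$ to $R':K'\to H'$ is a pair $(f:H\to H',g:K\to K')$ of algebra and coalgebra morphisms with $fR=R'g$ and $g(h\rightharpoonup k)=f(h)\rightharpoonup' g(k)$. $\mathcal{YD}\mathrm{rRB}(\mathrm{Vec}_\Bbbk)$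 denotes the category of Yetter--Drinfeld relative Rota--Baxter operators. *)

theory Defs
  imports Complex_Main
begin

text \<open>Elements of a tensor
product V (x) W are represented by finite lists of pairs (sums of elementary tensors);
two such lists denote the same tensor iff every bilinear form V x W -> 'f takes the same
value on them (this is exactly equality in V (x) W, as bilinear forms are the dual of
V (x) W and the dual separates points).  Likewise for triple tensors.\<close>

definition lin :: "('f \<Rightarrow> 'a \<Rightarrow> 'a) \<Rightarrow> ('f \<Rightarrow> 'b \<Rightarrow> 'b) \<Rightarrow> ('a::plus \<Rightarrow> 'b::plus) \<Rightarrow> bool" where
  "lin s1 s2 f \<longleftrightarrow> (\<forall>x y. f (x + y) = f x + f y) \<and> (\<forall>c x. f (s1 c x) = s2 c (f x))"

definition bilin :: "('f \<Rightarrow> 'a \<Rightarrow> 'a) \<Rightarrow> ('f \<Rightarrow> 'b \<Rightarrow> 'b) \<Rightarrow> ('f \<Rightarrow> 'c \<Rightarrow> 'c)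
    \<Rightarrow> ('a::plus \<Rightarrow> 'b::plus \<Rightarrow> 'c::plus) \<Rightarrow> bool" where
  "bilin s1 s2 s3 f \<longleftrightarrow> (\<forall>x. lin s2 s3 (f x)) \<and> (\<forall>y. lin s1 s3 (\<lambda>x. f x y))"

definition trilin :: "('f \<Rightarrow> 'a \<Rightarrow> 'a) \<Rightarrow> ('f \<Rightarrow> 'b \<Rightarrow> 'b) \<Rightarrow> ('f \<Rightarrow> 'c \<Rightarrow> 'c) \<Rightarrow> ('f \<Rightarrow> 'd \<Rightarrow> 'd)
    \<Rightarrow> ('a::plus \<Rightarrow> 'b::plus \<Rightarrow> 'c::plus \<Rightarrow> 'd::plus) \<Rightarrow> bool" where
  "trilin s1 s2 s3 s4 f \<longleftrightarrow> (\<forall>x. bilin s2 s3 s4 (f x)) \<and> (\<forall>y z. lin s1 s4 (\<lambda>x. f x y z))"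

definition teq2 :: "('f::field \<Rightarrow> 'a \<Rightarrow> 'a) \<Rightarrow> ('f \<Rightarrow> 'b \<Rightarrow> 'b)
    \<Rightarrow> ('a::plus \<times> 'b::plus) list \<Rightarrow> ('a \<times> 'b) list \<Rightarrow> bool" where
  "teq2 s1 s2 t t' \<longleftrightarrow> (\<forall>\<phi>. bilin s1 s2 (*) \<phi> \<longrightarrow>
     sum_list (map (\<lambda>(a, b). \<phi> a b) t) = sum_list (map (\<lambda>(a, b). \<phi> a b) t'))"

definition teq3 :: "('f::field \<Rightarrow> 'a \<Rightarrow> 'a) \<Rightarrow> ('f \<Rightarrow> 'b \<Rightarrow> 'b) \<Rightarrow> ('f \<Rightarrow> 'c \<Rightarrow> 'c)
    \<Rightarrow> ('a::plus \<times> 'b::plus \<times> 'c::plus) list \<Rightarrow> ('a \<times> 'b \<times> 'c) list \<Rightarrow> bool" where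
  "teq3 s1 s2 s3 t t' \<longleftrightarrow> (\<forall>\<phi>. trilin s1 s2 s3 (*) \<phi> \<longrightarrow>
     sum_list (map (\<lambda>(a, b, c). \<phi> a b c) t) = sum_list (map (\<lambda>(a, b, c). \<phi> a b c) t'))"

definition ssum :: "('a \<times> 'b) list \<Rightarrow> ('a \<Rightarrow> 'b \<Rightarrow> 'v::monoid_add) \<Rightarrow> 'v" where
  "ssum t F = sum_list (map (\<lambda>(a, b). F a b) t)"

definition lsum :: "('a \<times> 'b) list \<Rightarrow> ('a \<Rightarrow> 'b \<Rightarrow> 'w list) \<Rightarrow> 'w list" where
  "lsum t F = concat (map (\<lambda>(a, b). F a b) t)"

text \<open>Sweedler notation: sw3 cop x F = F x_1 x_2 x_3 (summed), sw4 likewise.\<close>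
definition sw3 :: "('h \<Rightarrow> ('h \<times> 'h) list) \<Rightarrow> 'h \<Rightarrow> ('h \<Rightarrow> 'h \<Rightarrow> 'h \<Rightarrow> 'v::monoid_add) \<Rightarrow> 'v" where
  "sw3 cop x F = ssum (cop x) (\<lambda>a b. ssum (cop a) (\<lambda>c d. F c d b))"

definition lw3 :: "('h \<Rightarrow> ('h \<times> 'h) list) \<Rightarrow> 'h \<Rightarrow> ('h \<Rightarrow> 'h \<Rightarrow> 'h \<Rightarrow> 'w list) \<Rightarrow> 'w list" where
  "lw3 cop x F = lsum (cop x) (\<lambda>a b. lsum (cop a) (\<lambda>c d. F c d b))"

definition lw4 :: "('h \<Rightarrow> ('h \<times> 'h) list) \<Rightarrow> 'h \<Rightarrow> ('h \<Rightarrow> 'h \<Rightarrow> 'h \<Rightarrow> 'h \<Rightarrow> 'w list) \<Rightarrow> 'w list" where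
  "lw4 cop x F = lw3 cop x (\<lambda>a b c. lsum (cop c) (\<lambda>d e. F a b d e))"

record ('f, 'h) halg =
  h_sc  :: "'f \<Rightarrow> 'h \<Rightarrow> 'h"
  h_mul :: "'h \<Rightarrow> 'h \<Rightarrow> 'h"
  h_one :: "'h"
  h_cop :: "'h \<Rightarrow> ('h \<times> 'h) list"
  h_cou :: "'h \<Rightarrow> 'f"
  h_ant :: "'h \<Rightarrow> 'h"

definition is_algebra :: "('f::field, 'h::ab_group_add) halg \<Rightarrow> bool" where
  "is_algebra A \<longleftrightarrow> vector_space (h_sc A) \<and> bilin (h_sc A) (h_sc A) (h_sc A) (h_mul A)
    \<and> (\<forall>x y z. h_mul A (h_mul A x y) z = h_mul A x (h_mul A y z))
    \<and> (\<forall>x. h_mul A (h_one A) x = x \<and> h_mul A x (h_one A) = x)"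

definition is_coalgebra :: "('f::field, 'h::ab_group_add) halg \<Rightarrow> bool" where
  "is_coalgebra A \<longleftrightarrow> vector_space (h_sc A)
    \<and> (\<forall>x y. teq2 (h_sc A) (h_sc A) (h_cop A (x + y)) (h_cop A x @ h_cop A y))
    \<and> (\<forall>c x. teq2 (h_sc A) (h_sc A) (h_cop A (h_sc A c x))
                  (map (\<lambda>(a, b). (h_sc A c a, b)) (h_cop A x)))
    \<and> lin (h_sc A) (*) (h_cou A)
    \<and> (\<forall>x. teq3 (h_sc A) (h_sc A) (h_sc A)
            (lsum (h_cop A x) (\<lambda>a b. map (\<lambda>(c, d). (c, d, b)) (h_cop A a)))
            (lsum (h_cop A x) (\<lambda>a b. map (\<lambda>(c, d). (a, c, d)) (h_cop A b))))
    \<and> (\<forall>x. ssum (h_cop A x) (\<lambda>a b. h_sc A (h_cou A a) b) = x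
         \<and> ssum (h_cop A x) (\<lambda>a b. h_sc A (h_cou A b) a) = x)"

definition is_antipode :: "('f::field, 'h::ab_group_add) halg \<Rightarrow> bool" where
  "is_antipode A \<longleftrightarrow> lin (h_sc A) (h_sc A) (h_ant A)
    \<and> (\<forall>x. ssum (h_cop A x) (\<lambda>a b. h_mul A a (h_ant A b)) = h_sc A (h_cou A x) (h_one A)
         \<and> ssum (h_cop A x) (\<lambda>a b. h_mul A (h_ant A a) b) = h_sc A (h_cou A x) (h_one A))"

definition unit_counit_compat :: "('f::field, 'h::ab_group_add) halg \<Rightarrow> bool" where
  "unit_counit_compat A \<longleftrightarrow> (\<forall>a b. h_cou A (h_mul A a b) = h_cou A a * h_cou A b)
    \<and> h_cou A (h_one A) = 1
    \<and> teq2 (h_sc A) (h_sc A) (h_cop A (h_one A)) [(h_one A, h_one A)]"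

definition is_hopf_algebra :: "('f::field, 'h::ab_group_add) halg \<Rightarrow> bool" where
  "is_hopf_algebra A \<longleftrightarrow> is_algebra A \<and> is_coalgebra A \<and> unit_counit_compat A
    \<and> (\<forall>x y. teq2 (h_sc A) (h_sc A) (h_cop A (h_mul A x y))
          (lsum (h_cop A x) (\<lambda>x1 x2. lsum (h_cop A y) (\<lambda>y1 y2. [(h_mul A x1 y1, h_mul A x2 y2)]))))
    \<and> is_antipode A"

definition alg_coalg_morph :: "('f::field, 'h::ab_group_add) halg \<Rightarrow> ('f, 'g::ab_group_add) halg
    \<Rightarrow> ('h \<Rightarrow> 'g) \<Rightarrow> bool" where
  "alg_coalg_morph A A' f \<longleftrightarrow> lin (h_sc A) (h_sc A') f
    \<and> (\<forall>x y. f (h_mul A x y) = h_mul A' (f x) (f y)) \<and> f (h_one A) = h_one A'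
    \<and> (\<forall>x. teq2 (h_sc A') (h_sc A') (h_cop A' (f x)) (map (\<lambda>(a, b). (f a, f b)) (h_cop A x)))
    \<and> (\<forall>x. h_cou A' (f x) = h_cou A x)"

text \<open>beta is a convolution inverse of alpha(x)(y) = act x y in Hom(H, End(H)).\<close>
definition conv_inv :: "('f::field, 'h::ab_group_add) halg \<Rightarrow> ('h \<Rightarrow> 'h \<Rightarrow> 'h)
    \<Rightarrow> ('h \<Rightarrow> 'h \<Rightarrow> 'h) \<Rightarrow> bool" where
  "conv_inv A act \<beta> \<longleftrightarrow> bilin (h_sc A) (h_sc A) (h_sc A) \<beta>
    \<and> (\<forall>x y. ssum (h_cop A x) (\<lambda>a b. act a (\<beta> b y)) = h_sc A (h_cou A x) y
           \<and> ssum (h_cop A x) (\<lambda>a b. \<beta> a (act b y)) = h_sc A (h_cou A x) y)"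

text \<open>The (unique) convolution inverse beta_act.\<close>
definition betaOf :: "('f::field, 'h::ab_group_add) halg \<Rightarrow> ('h \<Rightarrow> 'h \<Rightarrow> 'h) \<Rightarrow> 'h \<Rightarrow> 'h \<Rightarrow> 'h" where
  "betaOf A act = (SOME \<beta>. conv_inv A act \<beta>)"

definition bul :: "('f::field, 'h::ab_group_add) halg \<Rightarrow> ('h \<Rightarrow> 'h \<Rightarrow> 'h) \<Rightarrow> 'h \<Rightarrow> 'h \<Rightarrow> 'h" where
  "bul A act x y = ssum (h_cop A x) (\<lambda>a b. h_mul A a (act b y))"

definition Sr :: "('f::field, 'h::ab_group_add) halg \<Rightarrow> ('h \<Rightarrow> 'h \<Rightarrow> 'h) \<Rightarrow> 'h \<Rightarrow> 'h" where
  "Sr A act x = ssum (h_cop A x) (\<lambda>a b. betaOf A act a (h_ant A b))"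

definition lhp :: "('f::field, 'h::ab_group_add) halg \<Rightarrow> ('h \<Rightarrow> 'h \<Rightarrow> 'h) \<Rightarrow> 'h \<Rightarrow> 'h \<Rightarrow> 'h" where
  "lhp A act x y = ssum (h_cop A x) (\<lambda>x1 x2. ssum (h_cop A y) (\<lambda>y1 y2.
      bul A act (bul A act (Sr A act (act x1 y1)) x2) y2))"

definition is_ydph :: "('f::field, 'h::ab_group_add) halg \<Rightarrow> ('h \<Rightarrow> 'h \<Rightarrow> 'h) \<Rightarrow> bool" where
  "is_ydph A act \<longleftrightarrow> is_algebra A \<and> is_coalgebra A \<and> is_antipode A
    \<comment> \<open>act : H (x) H -> H is a coalgebra morphism\<close>
    \<and> bilin (h_sc A) (h_sc A) (h_sc A) act
    \<and> (\<forall>x y. teq2 (h_sc A) (h_sc A) (h_cop A (act x y))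
          (lsum (h_cop A x) (\<lambda>x1 x2. lsum (h_cop A y) (\<lambda>y1 y2. [(act x1 y1, act x2 y2)]))))
    \<and> (\<forall>x y. h_cou A (act x y) = h_cou A x * h_cou A y)
    \<comment> \<open>(P1)\<close>
    \<and> (\<forall>x y z. act x (h_mul A y z) = ssum (h_cop A x) (\<lambda>a b. h_mul A (act a y) (act b z)))
    \<comment> \<open>(P2)\<close>
    \<and> (\<forall>x y z. act x (act y z) = act (bul A act x y) z)
    \<comment> \<open>(P3)\<close>
    \<and> (\<exists>\<beta>. conv_inv A act \<beta>)
    \<comment> \<open>(P4)\<close>
    \<and> unit_counit_compat A
    \<comment> \<open>(P5)\<close>
    \<and> (\<forall>x y. teq2 (h_sc A) (h_sc A) (h_cop A (h_mul A x y))
          (lw4 (h_cop A) x (\<lambda>x1 x2 x3 x4. lsum (h_cop A y) (\<lambda>y1 y2.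
              [(h_mul A x1 (act x2 (betaOf A act x4 y1)), h_mul A x3 y2)]))))
    \<comment> \<open>(P6)\<close>
    \<and> (\<forall>x. teq2 (h_sc A) (h_sc A) (h_cop A (Sr A act x))
          (lsum (h_cop A x) (\<lambda>a b. [(Sr A act b, Sr A act a)])))
    \<and> (\<forall>x y. teq2 (h_sc A) (h_sc A)
          (lsum (h_cop A x) (\<lambda>x1 x2. lsum (h_cop A y) (\<lambda>y1 y2. [(act x1 y1, lhp A act x2 y2)])))
          (lsum (h_cop A x) (\<lambda>x1 x2. lsum (h_cop A y) (\<lambda>y1 y2. [(act x2 y2, lhp A act x1 y1)]))))"

definition ydph_morph :: "('f::field, 'h::ab_group_add) halg \<Rightarrow> ('h \<Rightarrow> 'h \<Rightarrow> 'h)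
    \<Rightarrow> ('f, 'g::ab_group_add) halg \<Rightarrow> ('g \<Rightarrow> 'g \<Rightarrow> 'g) \<Rightarrow> ('h \<Rightarrow> 'g) \<Rightarrow> bool" where
  "ydph_morph A act A' act' g \<longleftrightarrow> alg_coalg_morph A A' g
    \<and> (\<forall>x y. g (act x y) = act' (g x) (g y))"

definition sub_hopf :: "('f::field, 'h::ab_group_add) halg \<Rightarrow> ('h \<Rightarrow> 'h \<Rightarrow> 'h) \<Rightarrow> ('f, 'h) halg" where
  "sub_hopf A act = A\<lparr>h_mul := bul A act, h_ant := Sr A act\<rparr>"

definition yd_coact :: "('f::field, 'h::ab_group_add) halg \<Rightarrow> ('h \<Rightarrow> 'h \<Rightarrow> 'h) \<Rightarrow> 'h \<Rightarrow> ('h \<times> 'h) list" where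
  "yd_coact A act a = lw3 (h_cop A) a (\<lambda>a1 a2 a3. [(bul A act a1 (Sr A act a3), a2)])"

definition is_yd_module :: "('f::field, 'h::ab_group_add) halg \<Rightarrow> ('f \<Rightarrow> 'v \<Rightarrow> 'v)
    \<Rightarrow> ('h \<Rightarrow> 'v::ab_group_add \<Rightarrow> 'v) \<Rightarrow> ('v \<Rightarrow> ('h \<times> 'v) list) \<Rightarrow> bool" where
  "is_yd_module B sV act rho \<longleftrightarrow> vector_space sV
    \<and> bilin (h_sc B) sV sV act
    \<and> (\<forall>v. act (h_one B) v = v) \<and> (\<forall>a b v. act (h_mul B a b) v = act a (act b v))
    \<and> (\<forall>v w. teq2 (h_sc B) sV (rho (v + w)) (rho v @ rho w))
    \<and> (\<forall>c v. teq2 (h_sc B) sV (rho (sV c v)) (map (\<lambda>(h, w). (h_sc B c h, w)) (rho v)))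
    \<and> (\<forall>v. teq3 (h_sc B) (h_sc B) sV
            (lsum (rho v) (\<lambda>h w. map (\<lambda>(h1, h2). (h1, h2, w)) (h_cop B h)))
            (lsum (rho v) (\<lambda>h w. map (\<lambda>(h', w'). (h, h', w')) (rho w))))
    \<and> (\<forall>v. ssum (rho v) (\<lambda>h w. sV (h_cou B h) w) = v)
    \<and> (\<forall>a v. teq2 (h_sc B) sV (rho (act a v))
            (lw3 (h_cop B) a (\<lambda>a1 a2 a3. lsum (rho v) (\<lambda>h w.
                [(h_mul B (h_mul B a1 h) (h_ant B a3), act a2 w)]))))"

text \<open>Bimonoid in the braided category of YD modules over B, braiding
sigma(v (x) w) = v_{-1} act w (x) v_0.  The field h_ant of K is irrelevant.\<close>
definition is_yd_bimonoid :: "('f::field, 'h::ab_group_add) halg \<Rightarrow> ('f, 'k::ab_group_add) halg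
    \<Rightarrow> ('h \<Rightarrow> 'k \<Rightarrow> 'k) \<Rightarrow> ('k \<Rightarrow> ('h \<times> 'k) list) \<Rightarrow> bool" where
  "is_yd_bimonoid B K act rho \<longleftrightarrow> is_yd_module B (h_sc K) act rho
    \<and> is_algebra K \<and> is_coalgebra K
    \<comment> \<open>multiplication and unit are module maps\<close>
    \<and> (\<forall>a x y. act a (h_mul K x y) = ssum (h_cop B a) (\<lambda>a1 a2. h_mul K (act a1 x) (act a2 y)))
    \<and> (\<forall>a. act a (h_one K) = h_sc K (h_cou B a) (h_one K))
    \<comment> \<open>multiplication and unit are comodule maps\<close>
    \<and> (\<forall>x y. teq2 (h_sc B) (h_sc K) (rho (h_mul K x y))
          (lsum (rho x) (\<lambda>h v. lsum (rho y) (\<lambda>h' w. [(h_mul B h h', h_mul K v w)]))))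
    \<and> teq2 (h_sc B) (h_sc K) (rho (h_one K)) [(h_one B, h_one K)]
    \<comment> \<open>comultiplication and counit are module maps\<close>
    \<and> (\<forall>a x. teq2 (h_sc K) (h_sc K) (h_cop K (act a x))
          (lsum (h_cop B a) (\<lambda>a1 a2. lsum (h_cop K x) (\<lambda>x1 x2. [(act a1 x1, act a2 x2)]))))
    \<and> (\<forall>a x. h_cou K (act a x) = h_cou B a * h_cou K x)
    \<comment> \<open>comultiplication and counit are comodule maps\<close>
    \<and> (\<forall>x. teq3 (h_sc B) (h_sc K) (h_sc K)
          (lsum (rho x) (\<lambda>h v. map (\<lambda>(v1, v2). (h, v1, v2)) (h_cop K v)))
          (lsum (h_cop K x) (\<lambda>x1 x2. lsum (rho x1) (\<lambda>h v. lsum (rho x2) (\<lambda>h' w.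
              [(h_mul B h h', v, w)])))))
    \<and> (\<forall>x. ssum (rho x) (\<lambda>h v. h_sc B (h_cou K v) h) = h_sc B (h_cou K x) (h_one B))
    \<comment> \<open>bimonoid axioms\<close>
    \<and> unit_counit_compat K
    \<and> (\<forall>x y. teq2 (h_sc K) (h_sc K) (h_cop K (h_mul K x y))
          (lsum (h_cop K x) (\<lambda>x1 x2. lsum (h_cop K y) (\<lambda>y1 y2. lsum (rho x2) (\<lambda>h v.
              [(h_mul K x1 (act h y1), h_mul K v y2)])))))"

definition is_yd_rrb :: "('f::field, 'h::ab_group_add) halg \<Rightarrow> ('f, 'k::ab_group_add) halg
    \<Rightarrow> ('h \<Rightarrow> 'k \<Rightarrow> 'k) \<Rightarrow> ('k \<Rightarrow> ('h \<times> 'k) list) \<Rightarrow> ('k \<Rightarrow> 'h) \<Rightarrow> bool" where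
  "is_yd_rrb B K act rho R \<longleftrightarrow> is_hopf_algebra B \<and> is_yd_bimonoid B K act rho
    \<comment> \<open>R is a coalgebra morphism\<close>
    \<and> lin (h_sc K) (h_sc B) R
    \<and> (\<forall>a. teq2 (h_sc B) (h_sc B) (h_cop B (R a)) (map (\<lambda>(a1, a2). (R a1, R a2)) (h_cop K a)))
    \<and> (\<forall>a. h_cou B (R a) = h_cou K a)
    \<comment> \<open>(RB1)\<close>
    \<and> (\<forall>a b. h_mul B (R a) (R b) = R (ssum (h_cop K a) (\<lambda>a1 a2. h_mul K a1 (act (R a2) b))))
    \<comment> \<open>(RB2)\<close>
    \<and> (\<forall>a b. teq2 (h_sc B) (h_sc B)
          (lw3 (h_cop K) a (\<lambda>a1 a2 a3. lw3 (h_cop K) b (\<lambda>b1 b2 b3.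
             [(h_mul B (h_mul B (h_ant B (R (act (R a1) b1))) (R a2)) (R b2), R (act (R a3) b3))])))
          (lw3 (h_cop K) a (\<lambda>a1 a2 a3. lw3 (h_cop K) b (\<lambda>b1 b2 b3.
             [(h_mul B (h_mul B (h_ant B (R (act (R a2) b2))) (R a3)) (R b3), R (act (R a1) b1))]))))
    \<comment> \<open>bijectivity and (RB3)\<close>
    \<and> bij R
    \<and> (\<forall>a. sw3 (h_cop B) a (\<lambda>a1 a2 a3. h_mul K (act a1 (inv R (h_ant B a2))) (inv R a3))
           = h_sc K (h_cou B a) (h_one K))"

definition yd_rrb_morph :: "('f::field, 'h::ab_group_add) halg \<Rightarrow> ('f, 'k::ab_group_add) halg
    \<Rightarrow> ('h \<Rightarrow> 'k \<Rightarrow> 'k) \<Rightarrow> ('k \<Rightarrow> 'h)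
    \<Rightarrow> ('f, 'h2::ab_group_add) halg \<Rightarrow> ('f, 'k2::ab_group_add) halg
    \<Rightarrow> ('h2 \<Rightarrow> 'k2 \<Rightarrow> 'k2) \<Rightarrow> ('k2 \<Rightarrow> 'h2) \<Rightarrow> ('h \<Rightarrow> 'h2) \<Rightarrow> ('k \<Rightarrow> 'k2) \<Rightarrow> bool" where
  "yd_rrb_morph B K act R B' K' act' R' f g \<longleftrightarrow>
    alg_coalg_morph B B' f \<and> alg_coalg_morph K K' g
    \<and> (\<forall>k. f (R k) = R' (g k))
    \<and> (\<forall>h k. g (act h k) = act' (f h) (g k))"

end

theory Submission
  imports Defs
begin

lemma sep_point:
  assumes vs: "vector_space (s::'f::field \<Rightarrow> 'w::ab_group_add \<Rightarrow> 'w)"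
    and H: "\<And>\<psi>. lin s (*) \<psi> \<Longrightarrow> \<psi> u = (\<psi> v :: 'f)"
  shows "u = v"
proof (rule ccontr)
  interpret vector_space s by (rule vs)
  assume ne: "u \<noteq> v"
  define w where "w = u - v"
  have w0: "w \<noteq> 0" using ne by (simp add: w_def)
  have ind: "independent {w}" using w0 by simp
  define B where "B = extend_basis {w}"
  have iB: "independent B" using independent_extend_basis[OF ind] by (simp add: B_def)
  have sB: "\<And>x. x \<in> span B" using span_extend_basis[OF ind] by (simp add: B_def)
  have wB: "w \<in> B" using extend_basis_superset[OF ind] by (simp add: B_def)
  define \<psi> where "\<psi> x = representation B x w" for x
  have "lin s (*) \<psi>"
    unfolding lin_def \<psi>_def using representation_add[OF iB sB sB] representation_scale[OF iB sB]
    by simp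
  from H[OF this] have "\<psi> u = \<psi> v" .
  moreover have "\<psi> u = \<psi> w + \<psi> v"
    unfolding \<psi>_def w_def using representation_add[OF iB sB sB, of "u - v" v] by simp
  moreover have "\<psi> w = 1" unfolding \<psi>_def using representation_basis[OF iB wB] by simp
  ultimately show False by simp
qed

lemma vs_field: "vector_space ((*) :: 'f::field \<Rightarrow> 'f \<Rightarrow> 'f)"
  by unfold_locales (auto simp: algebra_simps)

lemma lin_add: "lin s1 s2 f \<Longrightarrow> f (x + y) = f x + f y" by (simp add: lin_def)
lemma lin_scale: "lin s1 s2 f \<Longrightarrow> f (s1 c x) = s2 c (f x)" by (simp add: lin_def)
lemma lin_zero: "lin s1 s2 (f::'a::ab_group_add \<Rightarrow> 'b::ab_group_add) \<Longrightarrow> f 0 = 0"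
  using lin_add[of s1 s2 f 0 0] by simp
lemma lin_sum_list: "lin s1 s2 (f::'a::ab_group_add \<Rightarrow> 'b::ab_group_add) \<Longrightarrow> f (sum_list xs) = sum_list (map f xs)"
  by (induction xs) (auto simp: lin_zero lin_add)
lemma lin_comp: "lin s2 s3 g \<Longrightarrow> lin s1 s2 f \<Longrightarrow> lin s1 s3 (\<lambda>x. g (f x))"
  by (simp add: lin_def)
lemma lin_id: "lin s s (\<lambda>x. x)" by (simp add: lin_def)

lemma vs_scale_sum_list:
  assumes "vector_space s"
  shows "s c (sum_list (map f xs)) = sum_list (map (\<lambda>x. s c (f x)) xs)"
proof -
  interpret vector_space s by fact
  show ?thesis by (induction xs) (auto simp: scale_right_distrib)
qed

lemma ssum_cong: "(\<And>a b. F a b = G a b) \<Longrightarrow> ssum t F = ssum t G"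
  by (simp add: ssum_def)
lemma ssum_Nil[simp]: "ssum [] F = 0" by (simp add: ssum_def)
lemma ssum_Cons[simp]: "ssum ((a,b) # t) F = F a b + ssum t F" by (simp add: ssum_def)
lemma ssum_append[simp]: "ssum (t @ t') F = ssum t F + ssum t' F" by (simp add: ssum_def)
lemma ssum_map[simp]: "ssum (map (\<lambda>(a, b). (f a b, g a b)) t) F = ssum t (\<lambda>a b. F (f a b) (g a b))"
  by (induction t) (auto simp: ssum_def)
lemma ssum_lsum[simp]: "ssum (lsum t G) F = ssum t (\<lambda>a b. ssum (G a b) F)"
  by (induction t) (auto simp: ssum_def lsum_def)
lemma ssum_add: "ssum t (\<lambda>a b. F a b + G a b) = ssum t F + (ssum t G :: 'v::comm_monoid_add)"
  by (induction t) (auto simp: ssum_def algebra_simps)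
lemma ssum_zero[simp]: "ssum t (\<lambda>a b. 0) = (0::'v::comm_monoid_add)"
  by (induction t) (auto simp: ssum_def)
lemma ssum_swap: "ssum t (\<lambda>a b. ssum t' (\<lambda>c d. F a b c d)) = ssum t' (\<lambda>c d. ssum t (\<lambda>a b. F a b c d) :: 'v::comm_monoid_add)"
  by (induction t) (auto simp: ssum_add)

lemma lin_ssum_fixed:
  assumes "vector_space s2" "\<And>a b. lin s1 s2 (\<lambda>x. F x a b)"
  shows "lin s1 s2 (\<lambda>x. ssum L (F x))"
proof -
  interpret vector_space s2 by fact
  show ?thesis using assms(2) unfolding lin_def
    by (induction L) (auto simp: algebra_simps scale_right_distrib)
qed

lemma lin_ssum_outside:
  assumes "lin s1 s2 (f::'a::ab_group_add \<Rightarrow> 'b::ab_group_add)"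
  shows "f (ssum t F) = ssum t (\<lambda>a b. f (F a b))"
  using assms by (induction t) (auto simp: lin_zero lin_add)

definition ssum3 :: "('a \<times> 'b \<times> 'c) list \<Rightarrow> ('a \<Rightarrow> 'b \<Rightarrow> 'c \<Rightarrow> 'v::monoid_add) \<Rightarrow> 'v" where
  "ssum3 t F = sum_list (map (\<lambda>(a, b, c). F a b c) t)"

lemma ssum3_lsum[simp]: "ssum3 (lsum t G) F = ssum t (\<lambda>a b. ssum3 (G a b) F)"
  by (induction t) (auto simp: ssum_def ssum3_def lsum_def)
lemma ssum3_map1[simp]: "ssum3 (map (\<lambda>(c, d). (c, d, b)) t) F = ssum t (\<lambda>c d. F c d b)"
  by (induction t) (auto simp: ssum_def ssum3_def)
lemma ssum3_map2[simp]: "ssum3 (map (\<lambda>(c, d). (a, c, d)) t) F = ssum t (\<lambda>c d. F a c d)"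
  by (induction t) (auto simp: ssum_def ssum3_def)
lemma ssum3_map2'[simp]: "ssum3 (map (Pair a) t) F = ssum t (F a)"
  by (induction t) (auto simp: ssum_def ssum3_def)
lemma ssum_map1: "ssum (map (\<lambda>(a, b). (f a, b)) t) G = ssum t (\<lambda>a b. G (f a) b)"
  by (induction t) (auto simp: ssum_def)
lemma ssum_scale: "vector_space s \<Longrightarrow> s c (ssum t G) = ssum t (\<lambda>a b. s c (G a b))"
proof -
  assume "vector_space s" then interpret vector_space s .
  show ?thesis by (induction t) (auto simp: ssum_def scale_right_distrib)
qed
lemma ssum3_single[simp]: "ssum3 [(a,b,c)] F = F a b c" by (simp add: ssum3_def)

lemma teq2_transfer:
  assumes vs: "vector_space sW" and t: "teq2 s1 s2 t t'" and F: "bilin s1 s2 sW F"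
  shows "ssum t F = ssum t' F"
proof (rule sep_point[OF vs])
  fix \<psi> assume \<psi>: "lin sW (*) \<psi>"
  have "bilin s1 s2 (*) (\<lambda>a b. \<psi> (F a b))"
    using F \<psi> unfolding bilin_def by (auto intro: lin_comp)
  with t have "ssum t (\<lambda>a b. \<psi> (F a b)) = ssum t' (\<lambda>a b. \<psi> (F a b))"
    unfolding teq2_def ssum_def by blast
  then show "\<psi> (ssum t F) = \<psi> (ssum t' F)" by (simp add: lin_ssum_outside[OF \<psi>])
qed

lemma lin_ssum3_outside:
  assumes "lin s1 s2 (f::'a::ab_group_add \<Rightarrow> 'b::ab_group_add)"
  shows "f (ssum3 t F) = ssum3 t (\<lambda>a b c. f (F a b c))"
  using assms by (induction t) (auto simp: lin_zero lin_add ssum3_def)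

lemma teq3_transfer:
  assumes vs: "vector_space sW" and t: "teq3 s1 s2 s3 t t'" and F: "trilin s1 s2 s3 sW F"
  shows "ssum3 t F = ssum3 t' F"
proof (rule sep_point[OF vs])
  fix \<psi> assume \<psi>: "lin sW (*) \<psi>"
  have "trilin s1 s2 s3 (*) (\<lambda>a b c. \<psi> (F a b c))"
    using F \<psi> unfolding trilin_def bilin_def by (auto intro: lin_comp)
  with t have "ssum3 t (\<lambda>a b c. \<psi> (F a b c)) = ssum3 t' (\<lambda>a b c. \<psi> (F a b c))"
    unfolding teq3_def ssum3_def by blast
  then show "\<psi> (ssum3 t F) = \<psi> (ssum3 t' F)" by (simp add: lin_ssum3_outside[OF \<psi>])
qed

lemma teq2_refl: "teq2 s1 s2 t t" by (simp add: teq2_def)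

lemma teq2I: "(\<And>\<phi>. bilin s1 s2 (*) \<phi> \<Longrightarrow> ssum t \<phi> = ssum t' \<phi>) \<Longrightarrow> teq2 s1 s2 t t'"
  unfolding teq2_def ssum_def by blast
lemma teq3I: "(\<And>\<phi>. trilin s1 s2 s3 (*) \<phi> \<Longrightarrow> ssum3 t \<phi> = ssum3 t' \<phi>) \<Longrightarrow> teq3 s1 s2 s3 t t'"
  unfolding teq3_def ssum3_def by blast


locale ydph =
  fixes A :: "('f::field, 'h::ab_group_add) halg" and act :: "'h \<Rightarrow> 'h \<Rightarrow> 'h"
  assumes ax: "is_ydph A act"
begin

abbreviation "sc \<equiv> h_sc A"
abbreviation "mul \<equiv> h_mul A"
abbreviation "one \<equiv> h_one A"
abbreviation "cop \<equiv> h_cop A"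
abbreviation "cou \<equiv> h_cou A"
abbreviation "ant \<equiv> h_ant A"
abbreviation "\<beta> \<equiv> betaOf A act"
abbreviation "bu \<equiv> bul A act"
abbreviation "Sa \<equiv> Sr A act"

lemma alg: "is_algebra A" and coalg: "is_coalgebra A" and antip: "is_antipode A"
  using ax by (auto simp: is_ydph_def)

lemma vs: "vector_space sc" using alg by (simp add: is_algebra_def)
lemma mul_bilin: "bilin sc sc sc mul" using alg by (simp add: is_algebra_def)
lemma mul_assoc: "mul (mul x y) z = mul x (mul y z)" using alg by (simp add: is_algebra_def)
lemma one_mul[simp]: "mul one x = x" and mul_one[simp]: "mul x one = x" using alg by (simp_all add: is_algebra_def)
lemma cop_add: "teq2 sc sc (cop (x + y)) (cop x @ cop y)" using coalg by (simp add: is_coalgebra_def)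
lemma cop_scale: "teq2 sc sc (cop (sc c x)) (map (\<lambda>(a, b). (sc c a, b)) (cop x))" using coalg by (simp add: is_coalgebra_def)
lemma cou_lin: "lin sc (*) cou" using coalg by (simp add: is_coalgebra_def)
lemma coassoc_teq: "teq3 sc sc sc
            (lsum (cop x) (\<lambda>a b. map (\<lambda>(c, d). (c, d, b)) (cop a)))
            (lsum (cop x) (\<lambda>a b. map (\<lambda>(c, d). (a, c, d)) (cop b)))"
  using coalg by (simp add: is_coalgebra_def)
lemma counit_raw: "ssum (cop x) (\<lambda>a b. sc (cou a) b) = x" "ssum (cop x) (\<lambda>a b. sc (cou b) a) = x"
  using coalg by (simp_all add: is_coalgebra_def)
lemma ant_lin: "lin sc sc ant" using antip by (simp add: is_antipode_def)
lemma ant_prop: "ssum (cop x) (\<lambda>a b. mul a (ant b)) = sc (cou x) one"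
   "ssum (cop x) (\<lambda>a b. mul (ant a) b) = sc (cou x) one"
  using antip by (simp_all add: is_antipode_def)
lemma act_bilin: "bilin sc sc sc act" using ax by (simp add: is_ydph_def)
lemma act_cop: "teq2 sc sc (cop (act x y))
          (lsum (cop x) (\<lambda>x1 x2. lsum (cop y) (\<lambda>y1 y2. [(act x1 y1, act x2 y2)])))"
  using ax by (simp add: is_ydph_def)
lemma cou_act: "cou (act x y) = cou x * cou y" using ax by (simp add: is_ydph_def)
lemma P1: "act x (mul y z) = ssum (cop x) (\<lambda>a b. mul (act a y) (act b z))" using ax by (simp add: is_ydph_def)
lemma P2: "act x (act y z) = act (bu x y) z" using ax by (simp add: is_ydph_def)
lemma conv: "conv_inv A act \<beta>"
proof -
  have "\<exists>\<beta>. conv_inv A act \<beta>" using ax by (simp add: is_ydph_def)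
  then show ?thesis unfolding betaOf_def by (rule someI_ex)
qed
lemma beta_bilin: "bilin sc sc sc \<beta>" using conv by (simp add: conv_inv_def)
lemma conv1: "ssum (cop x) (\<lambda>a b. act a (\<beta> b y)) = sc (cou x) y"
  and conv2: "ssum (cop x) (\<lambda>a b. \<beta> a (act b y)) = sc (cou x) y"
  using conv by (simp_all add: conv_inv_def)
lemma cou_mul: "cou (mul a b) = cou a * cou b" and cou_one[simp]: "cou one = 1"
  and cop_one: "teq2 sc sc (cop one) [(one, one)]"
  using ax by (simp_all add: is_ydph_def unit_counit_compat_def)
lemma P5: "teq2 sc sc (cop (mul x y))
          (lw4 cop x (\<lambda>x1 x2 x3 x4. lsum (cop y) (\<lambda>y1 y2.
              [(mul x1 (act x2 (\<beta> x4 y1)), mul x3 y2)])))"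
  using ax by (simp add: is_ydph_def)
lemma P6a: "teq2 sc sc (cop (Sa x)) (lsum (cop x) (\<lambda>a b. [(Sa b, Sa a)]))"
  using ax by (simp add: is_ydph_def)
lemma P6b: "teq2 sc sc
          (lsum (cop x) (\<lambda>x1 x2. lsum (cop y) (\<lambda>y1 y2. [(act x1 y1, lhp A act x2 y2)])))
          (lsum (cop x) (\<lambda>x1 x2. lsum (cop y) (\<lambda>y1 y2. [(act x2 y2, lhp A act x1 y1)])))"
  using ax by (simp add: is_ydph_def)

lemma bilinD1: "bilin s1 s2 s3 f \<Longrightarrow> lin s2 s3 (f x)" by (simp add: bilin_def)
lemma bilinD2: "bilin s1 s2 s3 f \<Longrightarrow> lin s1 s3 (\<lambda>x. f x y)" by (simp add: bilin_def)

lemma vsf: "vector_space ((*) :: 'f \<Rightarrow> 'f \<Rightarrow> 'f)" by (rule vs_field)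

lemma lin_bilin_L: "bilin s1 s2 s3 g \<Longrightarrow> lin s s1 f \<Longrightarrow> lin s s3 (\<lambda>x. g (f x) c)"
  by (rule lin_comp[OF bilinD2]) 
lemma lin_bilin_R: "bilin s1 s2 s3 g \<Longrightarrow> lin s s2 f \<Longrightarrow> lin s s3 (\<lambda>x. g c (f x))"
  by (rule lin_comp[OF bilinD1])

lemma lin_mulL[simp]: "lin s sc f \<Longrightarrow> lin s sc (\<lambda>x. mul (f x) c)" by (rule lin_bilin_L[OF mul_bilin])
lemma lin_mulR[simp]: "lin s sc f \<Longrightarrow> lin s sc (\<lambda>x. mul c (f x))" by (rule lin_bilin_R[OF mul_bilin])
lemma lin_actL[simp]: "lin s sc f \<Longrightarrow> lin s sc (\<lambda>x. act (f x) c)" by (rule lin_bilin_L[OF act_bilin])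
lemma lin_actR[simp]: "lin s sc f \<Longrightarrow> lin s sc (\<lambda>x. act c (f x))" by (rule lin_bilin_R[OF act_bilin])
lemma lin_betaL[simp]: "lin s sc f \<Longrightarrow> lin s sc (\<lambda>x. \<beta> (f x) c)" by (rule lin_bilin_L[OF beta_bilin])
lemma lin_betaR[simp]: "lin s sc f \<Longrightarrow> lin s sc (\<lambda>x. \<beta> c (f x))" by (rule lin_bilin_R[OF beta_bilin])
lemma lin_antI[simp]: "lin s sc f \<Longrightarrow> lin s sc (\<lambda>x. ant (f x))" by (rule lin_comp[OF ant_lin])
lemma lin_couI[simp]: "lin s sc f \<Longrightarrow> lin s (*) (\<lambda>x. cou (f x))" by (rule lin_comp[OF cou_lin])
lemma lin_idI[simp]: "lin s s (\<lambda>x. x)" by (rule lin_id)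
lemma lin_scL[simp]: "vector_space sW \<Longrightarrow> lin s (*) f \<Longrightarrow> lin s sW (\<lambda>x. sW (f x) c)"
proof -
  assume v: "vector_space sW" and f: "lin s (*) f"
  interpret vector_space sW by fact
  show ?thesis using f unfolding lin_def by (simp add: scale_left_distrib)
qed
lemma lin_scR[simp]: "vector_space sW \<Longrightarrow> lin s sW f \<Longrightarrow> lin s sW (\<lambda>x. sW c (f x))"
proof -
  assume v: "vector_space sW" and f: "lin s sW f"
  interpret vector_space sW by fact
  show ?thesis using f unfolding lin_def by (simp add: scale_right_distrib mult.commute)
qed
lemma lin_plusI[simp]: "vector_space sW \<Longrightarrow> lin s sW f \<Longrightarrow> lin s sW g \<Longrightarrow> lin s sW (\<lambda>x. f x + g x)"
proof -
  assume v: "vector_space sW" and f: "lin s sW f" and g: "lin s sW g"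
  interpret vector_space sW by fact
  show ?thesis using f g unfolding lin_def by (simp add: scale_right_distrib algebra_simps)
qed
lemma lin_ssumI[simp]: "vector_space s2 \<Longrightarrow> (\<And>a b. lin s1 s2 (\<lambda>x. F x a b)) \<Longrightarrow> lin s1 s2 (\<lambda>x. ssum L (F x))"
  by (rule lin_ssum_fixed)

lemma vs_simp[simp]: "vector_space sc" "vector_space ((*) :: 'f \<Rightarrow> 'f \<Rightarrow> 'f)"
  by (rule vs, rule vs_field)

lemma cop_lin0:
  assumes W: "vector_space sW" and G: "bilin sc sc sW G"
  shows "lin sc sW (\<lambda>x. ssum (cop x) G)"
proof -
  interpret W: vector_space sW by fact
  have G1: "\<And>c a b. G (sc c a) b = sW c (G a b)" using G by (simp add: bilin_def lin_def)
  show ?thesis unfolding lin_def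
  proof safe
    fix x y show "ssum (cop (x + y)) G = ssum (cop x) G + ssum (cop y) G"
      using teq2_transfer[OF W cop_add G] by simp
  next
    fix c x show "ssum (cop (sc c x)) G = sW c (ssum (cop x) G)"
      using teq2_transfer[OF W cop_scale G] by (simp only: ssum_map1 G1 ssum_scale[OF W])
  qed
qed

lemma lin_copI[simp]: "vector_space sW \<Longrightarrow> lin s sc f \<Longrightarrow> bilin sc sc sW G \<Longrightarrow> lin s sW (\<lambda>x. ssum (cop (f x)) G)"
  by (rule lin_comp[OF cop_lin0])

lemma coassoc:
  assumes W: "vector_space sW" and F: "trilin sc sc sc sW F"
  shows "ssum (cop x) (\<lambda>a b. ssum (cop a) (\<lambda>c d. F c d b)) = ssum (cop x) (\<lambda>a b. ssum (cop b) (\<lambda>c d. F a c d))"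
  using teq3_transfer[OF W coassoc_teq F] by simp

lemma counitL:
  assumes W: "vector_space sW" and G: "lin sc sW G"
  shows "ssum (cop x) (\<lambda>a b. sW (cou a) (G b)) = G x"
proof -
  have "G x = G (ssum (cop x) (\<lambda>a b. sc (cou a) b))" using counit_raw by simp
  also have "\<dots> = ssum (cop x) (\<lambda>a b. sW (cou a) (G b))"
    by (simp add: lin_ssum_outside[OF G] lin_scale[OF G])
  finally show ?thesis by simp
qed
lemma counitR:
  assumes W: "vector_space sW" and G: "lin sc sW G"
  shows "ssum (cop x) (\<lambda>a b. sW (cou b) (G a)) = G x"
proof -
  have "G x = G (ssum (cop x) (\<lambda>a b. sc (cou b) a))" using counit_raw by simp
  also have "\<dots> = ssum (cop x) (\<lambda>a b. sW (cou b) (G a))"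
    by (simp add: lin_ssum_outside[OF G] lin_scale[OF G])
  finally show ?thesis by simp
qed


lemma coassoc_h: "trilin sc sc sc sc F \<Longrightarrow> ssum (cop x) (\<lambda>a b. ssum (cop a) (\<lambda>c d. F c d b)) = ssum (cop x) (\<lambda>a b. ssum (cop b) (\<lambda>c d. F a c d))"
  by (rule coassoc[OF vs])
lemma coassoc_f: "trilin sc sc sc (*) F \<Longrightarrow> ssum (cop x) (\<lambda>a b. ssum (cop a) (\<lambda>c d. F c d b)) = ssum (cop x) (\<lambda>a b. ssum (cop b) (\<lambda>c d. F a c d))"
  by (rule coassoc[OF vs_field])
lemma counitL_h[simp]: "lin sc sc G \<Longrightarrow> ssum (cop x) (\<lambda>a b. sc (cou a) (G b)) = G x" by (rule counitL[OF vs])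
lemma counitR_h[simp]: "lin sc sc G \<Longrightarrow> ssum (cop x) (\<lambda>a b. sc (cou b) (G a)) = G x" by (rule counitR[OF vs])
lemma counitL_f[simp]: "lin sc (*) G \<Longrightarrow> ssum (cop x) (\<lambda>a b. cou a * G b) = G x" by (rule counitL[OF vs_field])
lemma counitR_f[simp]: "lin sc (*) G \<Longrightarrow> ssum (cop x) (\<lambda>a b. cou b * G a) = G x" by (rule counitR[OF vs_field])

lemma counit_cc[simp]: "ssum (cop x) (\<lambda>a b. sc (cou a * cou b) v) = sc (cou x) v"
proof -
  have "ssum (cop x) (\<lambda>a b. sc (cou a * cou b) v) = ssum (cop x) (\<lambda>a b. sc (cou a) (sc (cou b) v))"
    using vector_space.vector_space_assms(3)[OF vs] by simp
  also have "\<dots> = sc (cou x) v" by (rule counitL_h) simp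
  finally show ?thesis .
qed

lemma bilin_scL: "bilin s1 s2 s3 g \<Longrightarrow> g (s1 c x) y = s3 c (g x y)" by (simp add: bilin_def lin_def)
lemma bilin_scR: "bilin s1 s2 s3 g \<Longrightarrow> g x (s2 c y) = s3 c (g x y)" by (simp add: bilin_def lin_def)
lemma bilin_addL: "bilin s1 s2 s3 g \<Longrightarrow> g (x + z) y = g x y + g z y" by (simp add: bilin_def lin_def)
lemma bilin_addR: "bilin s1 s2 s3 g \<Longrightarrow> g x (y + z) = g x y + g x z" by (simp add: bilin_def lin_def)

lemma sc_simps[simp]:
  "mul (sc c x) y = sc c (mul x y)" "mul x (sc c y) = sc c (mul x y)"
  "act (sc c x) y = sc c (act x y)" "act x (sc c y) = sc c (act x y)"
  "\<beta> (sc c x) y = sc c (\<beta> x y)" "\<beta> x (sc c y) = sc c (\<beta> x y)"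
  "ant (sc c x) = sc c (ant x)" "cou (sc c x) = c * cou x"
  "sc a (sc b x) = sc (a * b) x" "sc 1 x = x"
  using bilin_scL[OF mul_bilin] bilin_scR[OF mul_bilin] bilin_scL[OF act_bilin] bilin_scR[OF act_bilin]
    bilin_scL[OF beta_bilin] bilin_scR[OF beta_bilin] lin_scale[OF ant_lin] lin_scale[OF cou_lin]
    vector_space.vector_space_assms(3,4)[OF vs] by auto

lemma cop_one_sum: "vector_space sW \<Longrightarrow> bilin sc sc sW G \<Longrightarrow> ssum (cop one) G = G one one"
  using teq2_transfer[OF _ cop_one] by fastforce
lemma cop_one_h[simp]: "bilin sc sc sc G \<Longrightarrow> ssum (cop one) G = G one one"
  by (rule cop_one_sum; simp)
lemma cop_one_f[simp]: "bilin sc sc (*) G' \<Longrightarrow> ssum (cop one) G' = G' one one"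
  by (rule cop_one_sum; simp)+

lemma act_one_beta: "act one (\<beta> one y) = y"
  using conv1[of one y] by (simp add: cop_one_sum bilin_def)
lemma beta_one_act: "\<beta> one (act one y) = y"
  using conv2[of one y] by (simp add: cop_one_sum bilin_def)
lemma act_one_mul: "act one (mul y z) = mul (act one y) (act one z)"
  using P1[of one y z] by (simp add: cop_one_sum bilin_def)
lemma act_one_one: "act one one = one"
proof -
  have "act one (mul one (\<beta> one one)) = mul (act one one) (act one (\<beta> one one))" by (rule act_one_mul)
  then have "one = mul (act one one) one" by (simp add: act_one_beta)
  then show ?thesis by simp
qed
lemma bul_eq: "bu x y = ssum (cop x) (\<lambda>a b. mul a (act b y))"
  by (simp add: bul_def)
lemma bu_one_one: "bu one one = one"
  by (simp add: bul_eq cop_one_sum bilin_def act_one_one)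
lemma act_one[simp]: "act one z = z"
proof -
  have "act one (act one z) = act one z" using P2[of one one z] by (simp add: bu_one_one)
  then have "\<beta> one (act one (act one z)) = \<beta> one (act one z)" by simp
  then show ?thesis by (simp add: beta_one_act)
qed

lemma act_x_one_aux: "mul (act x one) z = sc (cou x) z"
proof -
  have "sc (cou x) z = ssum (cop x) (\<lambda>a b. act a (\<beta> b z))" by (simp add: conv1)
  also have "\<dots> = ssum (cop x) (\<lambda>a b. act a (mul one (\<beta> b z)))" by simp
  also have "\<dots> = ssum (cop x) (\<lambda>a b. ssum (cop a) (\<lambda>c d. mul (act c one) (act d (\<beta> b z))))"
    by (rule ssum_cong) (subst P1[symmetric], simp)
  also have "\<dots> = ssum (cop x) (\<lambda>a b. ssum (cop b) (\<lambda>c d. mul (act a one) (act c (\<beta> d z))))"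
    by (rule coassoc_h) (simp add: trilin_def bilin_def)
  also have "\<dots> = ssum (cop x) (\<lambda>a b. mul (act a one) (sc (cou b) z))"
    by (rule ssum_cong) (simp add: conv1 flip: lin_ssum_outside[OF bilinD1[OF mul_bilin]])
  also have "\<dots> = mul (act x one) z"
    by (simp add: counitR)
  finally show ?thesis by simp
qed
lemma act_x_one[simp]: "act x one = sc (cou x) one"
  using act_x_one_aux[of x one] by simp


lemma bu_bilin: "bilin sc sc sc bu"
  unfolding bilin_def bul_eq by (simp add: bilin_def)
lemma lin_buL[simp]: "lin s sc f \<Longrightarrow> lin s sc (\<lambda>x. bu (f x) c)" by (rule lin_bilin_L[OF bu_bilin])
lemma lin_buR[simp]: "lin s sc f \<Longrightarrow> lin s sc (\<lambda>x. bu c (f x))" by (rule lin_bilin_R[OF bu_bilin])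
lemma bu_sc[simp]: "bu (sc c x) y = sc c (bu x y)" "bu x (sc c y) = sc c (bu x y)"
  using bilin_scL[OF bu_bilin] bilin_scR[OF bu_bilin] by auto

lemma bu_one_left[simp]: "bu one y = y" by (simp add: bul_eq bilin_def)
lemma bu_one_right[simp]: "bu x one = x" by (simp add: bul_eq)

lemma cop_lin_sum: "vector_space sW \<Longrightarrow> bilin sc sc sW G \<Longrightarrow>
   ssum (cop (ssum t F)) G = ssum t (\<lambda>a b. ssum (cop (F a b)) G)"
  by (rule lin_ssum_outside[OF cop_lin0])

lemma P5_sum: assumes W: "vector_space sW" and G: "bilin sc sc sW G"
  shows "ssum (cop (mul x w)) G = ssum (cop x)(\<lambda>a b. ssum (cop a)(\<lambda>x1 x2. ssum (cop b)(\<lambda>x3 x4.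
     ssum (cop w)(\<lambda>w1 w2. G (mul x1 (act x2 (\<beta> x4 w1))) (mul x3 w2)))))"
  using teq2_transfer[OF W P5 G] by (simp add: lw4_def lw3_def)

lemma act_cop_sum: assumes W: "vector_space sW" and G: "bilin sc sc sW G"
  shows "ssum (cop (act x y)) G = ssum (cop x)(\<lambda>a b. ssum (cop y)(\<lambda>c d. G (act a c) (act b d)))"
  using teq2_transfer[OF W act_cop G] by simp

lemma lemK: assumes W: "vector_space sW" and H: "bilin sc sc sW H"
  shows "ssum (cop u) (\<lambda>p q. ssum (cop (act q y)) (\<lambda>w1 w2. H (\<beta> p w1) w2))
       = ssum (cop y) (\<lambda>y1 y2. H y1 (act u y2))"
proof -
  interpret W: vector_space sW by fact
  note [simp] = W
  have H1: "lin sc sW (\<lambda>w. H w z)" for z using H by (simp add: bilin_def)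
  have H2: "lin sc sW (H w)" for w using H by (simp add: bilin_def)
  have Hc: "H (sc c w) z = sW c (H w z)" for c w z using H by (simp add: bilin_def lin_def)
  have "ssum (cop u) (\<lambda>p q. ssum (cop (act q y)) (\<lambda>w1 w2. H (\<beta> p w1) w2))
     = ssum (cop u) (\<lambda>p q. ssum (cop q) (\<lambda>c d. ssum (cop y) (\<lambda>y1 y2. H (\<beta> p (act c y1)) (act d y2))))"
    by (rule ssum_cong) (rule act_cop_sum[OF W], simp add: bilin_def H1 H2 lin_comp[OF H1] lin_comp[OF H2])
  also have "\<dots> = ssum (cop u) (\<lambda>a b. ssum (cop a) (\<lambda>c d. ssum (cop y) (\<lambda>y1 y2. H (\<beta> c (act d y1)) (act b y2))))"
    by (rule coassoc[OF W, symmetric]) (simp add: trilin_def bilin_def lin_comp[OF H1] lin_comp[OF H2])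
  also have "\<dots> = ssum (cop u) (\<lambda>a b. ssum (cop y) (\<lambda>y1 y2. ssum (cop a) (\<lambda>c d. H (\<beta> c (act d y1)) (act b y2))))"
    by (rule ssum_cong) (rule ssum_swap)
  also have "\<dots> = ssum (cop u) (\<lambda>a b. ssum (cop y) (\<lambda>y1 y2. H (sc (cou a) y1) (act b y2)))"
    by (intro ssum_cong) (simp add: conv2 flip: lin_ssum_outside[OF H1])
  also have "\<dots> = ssum (cop u) (\<lambda>a b. sW (cou a) (ssum (cop y) (\<lambda>y1 y2. H y1 (act b y2))))"
    by (intro ssum_cong) (simp add: Hc ssum_scale[OF W])
  also have "\<dots> = ssum (cop y) (\<lambda>y1 y2. H y1 (act u y2))"
    by (rule counitL[OF W]) (simp add: lin_comp[OF H2])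
  finally show ?thesis .
qed


lemma cop_bu: assumes W: "vector_space sW" and G: "bilin sc sc sW G"
  shows "ssum (cop (bu x y)) G = ssum (cop x) (\<lambda>a b. ssum (cop y) (\<lambda>c d. G (bu a c) (bu b d)))"
proof -
  interpret W: vector_space sW by fact
  note [simp] = W
  have G1: "lin sc sW (\<lambda>w. G w z)" for z using G by (simp add: bilin_def)
  have G2: "lin sc sW (G w)" for w using G by (simp add: bilin_def)
  note GG = lin_comp[OF G1] lin_comp[OF G2]
  have "ssum (cop (bu x y)) G = ssum (cop x) (\<lambda>a b. ssum (cop (mul a (act b y))) G)"
    unfolding bul_eq by (rule cop_lin_sum[OF W G])
  also have "\<dots> = ssum (cop x) (\<lambda>a b. ssum (cop a)(\<lambda>a1 a2. ssum (cop a1)(\<lambda>x1 x2. ssum (cop a2)(\<lambda>x3 x4.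
     ssum (cop (act b y))(\<lambda>w1 w2. G (mul x1 (act x2 (\<beta> x4 w1))) (mul x3 w2))))))"
    by (rule ssum_cong) (rule P5_sum[OF W G])
  also have "\<dots> = ssum (cop x) (\<lambda>a1 r. ssum (cop r)(\<lambda>a2 b. ssum (cop a1)(\<lambda>x1 x2. ssum (cop a2)(\<lambda>x3 x4.
     ssum (cop (act b y))(\<lambda>w1 w2. G (mul x1 (act x2 (\<beta> x4 w1))) (mul x3 w2))))))"
    by (rule coassoc[OF W]) (simp add: trilin_def bilin_def GG)
  also have "\<dots> = ssum (cop x) (\<lambda>a1 r. ssum (cop a1)(\<lambda>x1 x2. ssum (cop r)(\<lambda>a2 b. ssum (cop a2)(\<lambda>x3 x4.
     ssum (cop (act b y))(\<lambda>w1 w2. G (mul x1 (act x2 (\<beta> x4 w1))) (mul x3 w2))))))"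
    by (rule ssum_cong) (rule ssum_swap)
  also have "\<dots> = ssum (cop x) (\<lambda>a1 r. ssum (cop a1)(\<lambda>x1 x2. ssum (cop r)(\<lambda>x3 s. ssum (cop s)(\<lambda>x4 b.
     ssum (cop (act b y))(\<lambda>w1 w2. G (mul x1 (act x2 (\<beta> x4 w1))) (mul x3 w2))))))"
    by (rule ssum_cong, rule ssum_cong, rule coassoc[OF W], simp add: trilin_def bilin_def GG)
  also have "\<dots> = ssum (cop x) (\<lambda>a1 r. ssum (cop a1)(\<lambda>x1 x2. ssum (cop r)(\<lambda>x3 s.
     ssum (cop y)(\<lambda>y1 y2. G (mul x1 (act x2 y1)) (mul x3 (act s y2))))))"
    by (intro ssum_cong) (rule lemK[OF W], simp add: bilin_def GG)
  also have "\<dots> = ssum (cop x) (\<lambda>a1 r. ssum (cop r)(\<lambda>x3 s. ssum (cop a1)(\<lambda>x1 x2.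
     ssum (cop y)(\<lambda>y1 y2. G (mul x1 (act x2 y1)) (mul x3 (act s y2))))))"
    by (rule ssum_cong) (rule ssum_swap)
  also have "\<dots> = ssum (cop x) (\<lambda>a b. ssum (cop y) (\<lambda>c d. G (bu a c) (bu b d)))"
    unfolding bul_eq
    by (simp add: lin_ssum_outside[OF G1] lin_ssum_outside[OF G2] ssum_swap[where t="cop y"])
  finally show ?thesis .
qed

lemma cou_bu: "cou (bu x y) = cou x * cou y"
  unfolding bul_eq by (simp add: lin_ssum_outside[OF cou_lin] cou_mul cou_act)


lemma bu_assoc: "bu (bu x y) z = bu x (bu y z)"
proof -
  have "bu (bu x y) z = ssum (cop x)(\<lambda>a b. ssum (cop y)(\<lambda>c d. mul (bu a c) (act (bu b d) z)))"
    unfolding bul_eq[of "bu x y"] by (rule cop_bu[OF vs]) (simp add: bilin_def)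
  also have "\<dots> = ssum (cop x)(\<lambda>a b. ssum (cop y)(\<lambda>c d. ssum (cop a)(\<lambda>a1 a2. mul a1 (mul (act a2 c) (act (bu b d) z)))))"
    unfolding bul_eq[of _ c for c] by (simp add: lin_ssum_outside[OF bilinD2[OF mul_bilin]] mul_assoc)
  also have "\<dots> = ssum (cop x)(\<lambda>a b. ssum (cop a)(\<lambda>a1 a2. ssum (cop y)(\<lambda>c d. mul a1 (mul (act a2 c) (act (bu b d) z)))))"
    by (rule ssum_cong) (rule ssum_swap)
  also have "\<dots> = ssum (cop x)(\<lambda>a b. ssum (cop b)(\<lambda>b1 b2. ssum (cop y)(\<lambda>c d. mul a (mul (act b1 c) (act (bu b2 d) z)))))"
    by (rule coassoc_h) (simp add: trilin_def bilin_def)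
  also have "\<dots> = ssum (cop x)(\<lambda>a b. ssum (cop y)(\<lambda>c d. ssum (cop b)(\<lambda>b1 b2. mul a (mul (act b1 c) (act (bu b2 d) z)))))"
    by (rule ssum_cong) (rule ssum_swap)
  also have "\<dots> = bu x (bu y z)"
    unfolding bul_eq[of x] bul_eq[of y]
    by (simp add: lin_ssum_outside[OF bilinD1[OF mul_bilin]] lin_ssum_outside[OF bilinD1[OF act_bilin]] P1 P2)
  finally show ?thesis .
qed


lemma Sa_eq: "Sa x = ssum (cop x) (\<lambda>a b. \<beta> a (ant b))" by (simp add: Sr_def)
lemma Sa_lin: "lin sc sc Sa"
proof -
  have "lin sc sc (\<lambda>x. ssum (cop x) (\<lambda>a b. \<beta> a (ant b)))" by (simp add: bilin_def)
  then show ?thesis by (simp add: Sa_eq[abs_def])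
qed
lemma lin_SaI[simp]: "lin s sc f \<Longrightarrow> lin s sc (\<lambda>x. Sa (f x))" by (rule lin_comp[OF Sa_lin])
lemma Sa_sc[simp]: "Sa (sc c x) = sc c (Sa x)" by (rule lin_scale[OF Sa_lin])

lemma antR: "ssum (cop x) (\<lambda>a b. bu a (Sa b)) = sc (cou x) one"
proof -
  have "ssum (cop x) (\<lambda>a b. bu a (Sa b)) = ssum (cop x) (\<lambda>a b. ssum (cop a) (\<lambda>a1 a2. ssum (cop b) (\<lambda>b1 b2. mul a1 (act a2 (\<beta> b1 (ant b2))))))"
    unfolding bul_eq Sa_eq by (simp add: lin_ssum_outside[OF bilinD1[OF act_bilin]] lin_ssum_outside[OF bilinD1[OF mul_bilin]])
  also have "\<dots> = ssum (cop x) (\<lambda>a1 r. ssum (cop r) (\<lambda>a2 b. ssum (cop b) (\<lambda>b1 b2. mul a1 (act a2 (\<beta> b1 (ant b2))))))"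
    by (rule coassoc_h) (simp add: trilin_def bilin_def)
  also have "\<dots> = ssum (cop x) (\<lambda>a1 r. ssum (cop r) (\<lambda>u b2. ssum (cop u) (\<lambda>a2 b1. mul a1 (act a2 (\<beta> b1 (ant b2))))))"
    by (rule ssum_cong) (rule coassoc_h[symmetric], simp add: trilin_def bilin_def)
  also have "\<dots> = ssum (cop x) (\<lambda>a1 r. ssum (cop r) (\<lambda>u b2. sc (cou u) (mul a1 (ant b2))))"
    by (intro ssum_cong) (simp add: conv1 flip: lin_ssum_outside[OF bilinD1[OF mul_bilin]])
  also have "\<dots> = ssum (cop x) (\<lambda>a1 r. mul a1 (ant r))"
    by (intro ssum_cong) simp
  also have "\<dots> = sc (cou x) one" by (rule ant_prop)
  finally show ?thesis .
qed

lemma act_Sa: "act (Sa x) y = \<beta> x y"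
proof -
  have aux: "ssum (cop x)(\<lambda>a b. act a (act (Sa b) y)) = sc (cou x) y" for x
  proof -
    have "ssum (cop x)(\<lambda>a b. act a (act (Sa b) y)) = act (ssum (cop x) (\<lambda>a b. bu a (Sa b))) y"
      by (simp add: P2 lin_ssum_outside[OF bilinD2[OF act_bilin]])
    then show ?thesis by (simp add: antR)
  qed
  have "\<beta> x y = ssum (cop x)(\<lambda>a b. \<beta> a (sc (cou b) y))" by simp
  also have "\<dots> = ssum (cop x)(\<lambda>a b. ssum (cop b)(\<lambda>c d. \<beta> a (act c (act (Sa d) y))))"
    by (rule ssum_cong) (simp add: aux flip: lin_ssum_outside[OF bilinD1[OF beta_bilin]])
  also have "\<dots> = ssum (cop x)(\<lambda>u d. ssum (cop u)(\<lambda>a c. \<beta> a (act c (act (Sa d) y))))"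
    by (rule coassoc_h[symmetric]) (simp add: trilin_def bilin_def)
  also have "\<dots> = act (Sa x) y"
    by (simp add: conv2)
  finally show ?thesis by simp
qed

lemma P6a_sum: assumes W: "vector_space sW" and G: "bilin sc sc sW G"
  shows "ssum (cop (Sa x)) G = ssum (cop x) (\<lambda>a b. G (Sa b) (Sa a))"
  using teq2_transfer[OF W P6a G] by simp

lemma beta_mul: "\<beta> x (mul y z) = ssum (cop x) (\<lambda>a b. mul (\<beta> b y) (\<beta> a z))"
proof -
  have "\<beta> x (mul y z) = act (Sa x) (mul y z)" by (simp add: act_Sa)
  also have "\<dots> = ssum (cop x) (\<lambda>a b. mul (act (Sa b) y) (act (Sa a) z))"
    unfolding P1 by (rule P6a_sum[OF vs]) (simp add: bilin_def)
  finally show ?thesis by (simp add: act_Sa)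
qed

lemma cou_Sa[simp]: "cou (Sa x) = cou x"
proof -
  have "cou x = cou (ssum (cop x) (\<lambda>a b. bu a (Sa b)))" by (simp add: antR)
  also have "\<dots> = ssum (cop x) (\<lambda>a b. cou a * cou (Sa b))"
    by (simp add: lin_ssum_outside[OF cou_lin] cou_bu)
  also have "\<dots> = cou (Sa x)" by (rule counitL_f) simp
  finally show ?thesis by simp
qed

lemma cou_beta: "cou (\<beta> x y) = cou x * cou y"
  by (simp flip: act_Sa add: cou_act)

lemma antL: "ssum (cop x) (\<lambda>a b. bu (Sa a) b) = sc (cou x) one"
proof -
  have "ssum (cop x) (\<lambda>a b. bu (Sa a) b) = ssum (cop x) (\<lambda>a b. ssum (cop a) (\<lambda>a1 a2. mul (Sa a2) (\<beta> a1 b)))"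
    unfolding bul_eq by (intro ssum_cong) (rule P6a_sum[OF vs, THEN trans], simp add: bilin_def, simp add: act_Sa)
  also have "\<dots> = ssum (cop x) (\<lambda>a b. ssum (cop a) (\<lambda>a1 a2. ssum (cop a2) (\<lambda>c d. mul (\<beta> c (ant d)) (\<beta> a1 b))))"
    unfolding Sa_eq by (simp add: lin_ssum_outside[OF bilinD2[OF mul_bilin]])
  also have "\<dots> = ssum (cop x) (\<lambda>a1 r. ssum (cop r) (\<lambda>a2 b. ssum (cop a2) (\<lambda>c d. mul (\<beta> c (ant d)) (\<beta> a1 b))))"
    by (rule coassoc_h) (simp add: trilin_def bilin_def)
  also have "\<dots> = ssum (cop x) (\<lambda>a1 r. ssum (cop r) (\<lambda>c s. ssum (cop s) (\<lambda>d b. mul (\<beta> c (ant d)) (\<beta> a1 b))))"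
    by (rule ssum_cong) (rule coassoc_h, simp add: trilin_def bilin_def)
  also have "\<dots> = ssum (cop x) (\<lambda>u s. ssum (cop u) (\<lambda>a1 c. ssum (cop s) (\<lambda>d b. mul (\<beta> c (ant d)) (\<beta> a1 b))))"
    by (rule coassoc_h[symmetric]) (simp add: trilin_def bilin_def)
  also have "\<dots> = ssum (cop x) (\<lambda>u s. ssum (cop s) (\<lambda>d b. ssum (cop u) (\<lambda>a1 c. mul (\<beta> c (ant d)) (\<beta> a1 b))))"
    by (rule ssum_cong) (rule ssum_swap)
  also have "\<dots> = ssum (cop x) (\<lambda>u s. \<beta> u (ssum (cop s) (\<lambda>d b. mul (ant d) b)))"
    by (simp add: beta_mul lin_ssum_outside[OF bilinD1[OF beta_bilin]])
  also have "\<dots> = ssum (cop x) (\<lambda>u s. sc (cou s) (sc (cou u) one))"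
    by (simp add: ant_prop flip: act_Sa)
  also have "\<dots> = sc (cou x) one"
    by (simp add: mult.commute)
  finally show ?thesis .
qed

lemma Sa_one[simp]: "Sa one = one"
  using antR[of one] by (simp add: bilin_def)



abbreviation "rho \<equiv> yd_coact A act"

lemma rho_sum0: "ssum (rho a) G = ssum (cop a)(\<lambda>p a3. ssum (cop p)(\<lambda>a1 a2. G (bu a1 (Sa a3)) a2))"
  by (simp add: yd_coact_def lw3_def)

lemma rho_sum: assumes W: "vector_space sW" and G: "bilin sc sc sW G"
  shows "ssum (rho a) G = ssum (cop a)(\<lambda>a1 r. ssum (cop r)(\<lambda>a2 a3. G (bu a1 (Sa a3)) a2))"
proof -
  interpret W: vector_space sW by fact
  note [simp] = W
  have G1: "lin sc sW (\<lambda>w. G w z)" for z using G by (simp add: bilin_def)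
  have G2: "lin sc sW (G w)" for w using G by (simp add: bilin_def)
  show ?thesis unfolding rho_sum0
    by (rule coassoc[OF W]) (simp add: trilin_def bilin_def lin_comp[OF G1] lin_comp[OF G2])
qed

lemma tri_lins: "trilin s1 s2 s3 s4 \<phi> \<Longrightarrow> lin s1 s4 (\<lambda>x. \<phi> x b c)"
   "trilin s1 s2 s3 s4 \<phi> \<Longrightarrow> lin s2 s4 (\<lambda>x. \<phi> a x c)"
   "trilin s1 s2 s3 s4 \<phi> \<Longrightarrow> lin s3 s4 (\<lambda>x. \<phi> a b x)"
  by (auto simp: trilin_def bilin_def)

lemma rho_coassoc: "teq3 sc sc sc
            (lsum (rho v) (\<lambda>h w. map (\<lambda>(h1, h2). (h1, h2, w)) (cop h)))
            (lsum (rho v) (\<lambda>h w. map (\<lambda>(h', w'). (h, h', w')) (rho w)))"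
proof (rule teq3I)
  fix \<phi> :: "'h \<Rightarrow> 'h \<Rightarrow> 'h \<Rightarrow> 'f" assume \<phi>: "trilin sc sc sc (*) \<phi>"
  note P = lin_comp[OF tri_lins(1)[OF \<phi>]] lin_comp[OF tri_lins(2)[OF \<phi>]] lin_comp[OF tri_lins(3)[OF \<phi>]]
  let ?N = "ssum (cop v)(\<lambda>x1 r1. ssum (cop r1)(\<lambda>x2 r2. ssum (cop r2)(\<lambda>x3 r3. ssum (cop r3)(\<lambda>x4 x5.
      \<phi> (bu x1 (Sa x5)) (bu x2 (Sa x4)) x3))))"
  have "ssum3 (lsum (rho v) (\<lambda>h w. map (\<lambda>(h1, h2). (h1, h2, w)) (cop h))) \<phi>
      = ssum (rho v) (\<lambda>h w. ssum (cop h) (\<lambda>h1 h2. \<phi> h1 h2 w))"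
    by simp
  also have "\<dots> = ssum (cop v)(\<lambda>a1 r. ssum (cop r)(\<lambda>a2 a3. ssum (cop (bu a1 (Sa a3))) (\<lambda>h1 h2. \<phi> h1 h2 a2)))"
    by (rule rho_sum[OF vs_field]) (simp add: bilin_def P)
  also have "\<dots> = ssum (cop v)(\<lambda>a1 r. ssum (cop r)(\<lambda>a2 a3. ssum (cop a1)(\<lambda>p q. ssum (cop a3)(\<lambda>e f.
       \<phi> (bu p (Sa f)) (bu q (Sa e)) a2))))"
    by (intro ssum_cong) (simp add: cop_bu[OF vs_field] P6a_sum[OF vs_field] bilin_def P)
  also have "\<dots> = ssum (cop v)(\<lambda>a1 r. ssum (cop a1)(\<lambda>p q. ssum (cop r)(\<lambda>a2 a3. ssum (cop a3)(\<lambda>e f.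
       \<phi> (bu p (Sa f)) (bu q (Sa e)) a2))))"
    by (rule ssum_cong) (rule ssum_swap)
  also have "\<dots> = ?N"
    by (rule coassoc_f) (simp add: trilin_def bilin_def P)
  finally have L: "ssum3 (lsum (rho v) (\<lambda>h w. map (\<lambda>(h1, h2). (h1, h2, w)) (cop h))) \<phi> = ?N" .
  have "ssum3 (lsum (rho v) (\<lambda>h w. map (\<lambda>(h', w'). (h, h', w')) (rho w))) \<phi>
     = ssum (rho v) (\<lambda>h w. ssum (rho w) (\<lambda>h' w'. \<phi> h h' w'))"
    by simp
  also have "\<dots> = ssum (cop v)(\<lambda>a1 r. ssum (cop r)(\<lambda>a2 a3. ssum (cop a2)(\<lambda>b1 s. ssum (cop s)(\<lambda>b2 b3.
        \<phi> (bu a1 (Sa a3)) (bu b1 (Sa b3)) b2))))"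
    by (simp add: rho_sum[OF vs_field] bilin_def P)
  also have "\<dots> = ssum (cop v)(\<lambda>a1 r. ssum (cop r)(\<lambda>b1 t. ssum (cop t)(\<lambda>s a3. ssum (cop s)(\<lambda>b2 b3.
        \<phi> (bu a1 (Sa a3)) (bu b1 (Sa b3)) b2))))"
    by (rule ssum_cong) (rule coassoc_f, simp add: trilin_def bilin_def P)
  also have "\<dots> = ?N"
    by (rule ssum_cong, rule ssum_cong, rule coassoc_f, simp add: trilin_def bilin_def P)
  finally show "ssum3 (lsum (rho v) (\<lambda>h w. map (\<lambda>(h1, h2). (h1, h2, w)) (cop h))) \<phi> =
     ssum3 (lsum (rho v) (\<lambda>h w. map (\<lambda>(h', w'). (h, h', w')) (rho w))) \<phi>" using L by simp
qed


abbreviation "lh \<equiv> lhp A act"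
lemma lhp_eq: "lh x y = ssum (cop x)(\<lambda>x1 x2. ssum (cop y)(\<lambda>y1 y2. bu (bu (Sa (act x1 y1)) x2) y2))"
  by (simp add: lhp_def)

lemmas outs = lin_ssum_outside[OF bilinD1[OF bu_bilin]] lin_ssum_outside[OF bilinD2[OF bu_bilin]]
  lin_ssum_outside[OF bilinD1[OF mul_bilin]] lin_ssum_outside[OF bilinD2[OF mul_bilin]]
  lin_ssum_outside[OF bilinD1[OF act_bilin]] lin_ssum_outside[OF bilinD2[OF act_bilin]]
  lin_ssum_outside[OF bilinD1[OF beta_bilin]] lin_ssum_outside[OF bilinD2[OF beta_bilin]]
  lin_ssum_outside[OF Sa_lin] lin_ssum_outside[OF ant_lin] lin_ssum_outside[OF cou_lin]

lemma ssum_sc_out: "ssum t (\<lambda>a b. sc c (F a b)) = sc c (ssum t F)"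
  by (rule ssum_scale[OF vs, symmetric])

lemma sc_mult: "sc (a * b) w = sc a (sc b w)" by simp

lemma counit2_h: assumes B: "bilin sc sc sc B"
  shows "ssum (cop x)(\<lambda>p x4. ssum (cop y)(\<lambda>q y4. sc (cou p * cou q) (B x4 y4))) = B x y"
proof -
  have "ssum (cop x)(\<lambda>p x4. ssum (cop y)(\<lambda>q y4. sc (cou p * cou q) (B x4 y4)))
      = ssum (cop x)(\<lambda>p x4. sc (cou p) (ssum (cop y)(\<lambda>q y4. sc (cou q) (B x4 y4))))"
    by (simp only: sc_mult ssum_sc_out)
  also have "\<dots> = ssum (cop y)(\<lambda>q y4. sc (cou q) (B x y4))"
    by (rule counitL_h) (simp add: lin_comp[OF bilinD2[OF B]] lin_comp[OF bilinD1[OF B]])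
  also have "\<dots> = B x y" by (rule counitL_h) (simp add: lin_comp[OF bilinD1[OF B]])
  finally show ?thesis .
qed

lemma F1: "bu x y = ssum (cop x)(\<lambda>x1 x2. ssum (cop y)(\<lambda>y1 y2. bu (act x1 y1) (lh x2 y2)))"
proof -
  have "ssum (cop x)(\<lambda>x1 x2. ssum (cop y)(\<lambda>y1 y2. bu (act x1 y1) (lh x2 y2)))
     = ssum (cop x)(\<lambda>x1 x2. ssum (cop y)(\<lambda>y1 y2. ssum (cop x2)(\<lambda>x3 x4. ssum (cop y2)(\<lambda>y3 y4.
          bu (bu (bu (act x1 y1) (Sa (act x3 y3))) x4) y4))))"
    unfolding lhp_eq by (simp add: outs bu_assoc)
  also have "\<dots> = ssum (cop x)(\<lambda>x1 x2. ssum (cop x2)(\<lambda>x3 x4. ssum (cop y)(\<lambda>y1 y2. ssum (cop y2)(\<lambda>y3 y4.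
          bu (bu (bu (act x1 y1) (Sa (act x3 y3))) x4) y4))))"
    by (rule ssum_cong) (rule ssum_swap)
  also have "\<dots> = ssum (cop x)(\<lambda>p x4. ssum (cop p)(\<lambda>x1 x3. ssum (cop y)(\<lambda>y1 y2. ssum (cop y2)(\<lambda>y3 y4.
          bu (bu (bu (act x1 y1) (Sa (act x3 y3))) x4) y4))))"
    by (rule coassoc_h[symmetric]) (simp add: trilin_def bilin_def)
  also have "\<dots> = ssum (cop x)(\<lambda>p x4. ssum (cop p)(\<lambda>x1 x3. ssum (cop y)(\<lambda>q y4. ssum (cop q)(\<lambda>y1 y3.
          bu (bu (bu (act x1 y1) (Sa (act x3 y3))) x4) y4))))"
    by (rule ssum_cong, rule ssum_cong, rule coassoc_h[symmetric], simp add: trilin_def bilin_def)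
  also have "\<dots> = ssum (cop x)(\<lambda>p x4. ssum (cop y)(\<lambda>q y4. ssum (cop p)(\<lambda>x1 x3. ssum (cop q)(\<lambda>y1 y3.
          bu (bu (bu (act x1 y1) (Sa (act x3 y3))) x4) y4))))"
    by (rule ssum_cong) (rule ssum_swap)
  also have "\<dots> = ssum (cop x)(\<lambda>p x4. ssum (cop y)(\<lambda>q y4. ssum (cop (act p q)) (\<lambda>z1 z2.
          bu (bu (bu z1 (Sa z2)) x4) y4)))"
    by (intro ssum_cong) (rule act_cop_sum[OF vs, symmetric], simp add: bilin_def)
  also have "\<dots> = ssum (cop x)(\<lambda>p x4. ssum (cop y)(\<lambda>q y4. sc (cou p) (sc (cou q) (bu x4 y4))))"
    by (simp add: antR cou_act mult.commute flip: outs)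
  also have "\<dots> = bu x y"
    by (simp only: sc_mult[symmetric]) (rule counit2_h[OF bu_bilin])
  finally show ?thesis by simp
qed


lemma F2: "ssum (cop x)(\<lambda>x1 x2. ssum (cop y)(\<lambda>y1 y2. bu (bu (lh x1 y1) (Sa y2)) (Sa x2))) = Sa (act x y)"
proof -
  have "ssum (cop x)(\<lambda>x1 x2. ssum (cop y)(\<lambda>y1 y2. bu (bu (lh x1 y1) (Sa y2)) (Sa x2)))
     = ssum (cop x)(\<lambda>x1 x2. ssum (cop y)(\<lambda>y1 y2. ssum (cop x1)(\<lambda>a c. ssum (cop y1)(\<lambda>b d.
          bu (Sa (act a b)) (bu c (bu (bu d (Sa y2)) (Sa x2)))))))"
    unfolding lhp_eq by (simp add: outs bu_assoc)
  also have "\<dots> = ssum (cop x)(\<lambda>x1 x2. ssum (cop x1)(\<lambda>a c. ssum (cop y)(\<lambda>y1 y2. ssum (cop y1)(\<lambda>b d.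
          bu (Sa (act a b)) (bu c (bu (bu d (Sa y2)) (Sa x2)))))))"
    by (rule ssum_cong) (rule ssum_swap)
  also have "\<dots> = ssum (cop x)(\<lambda>a r. ssum (cop r)(\<lambda>c x2. ssum (cop y)(\<lambda>y1 y2. ssum (cop y1)(\<lambda>b d.
          bu (Sa (act a b)) (bu c (bu (bu d (Sa y2)) (Sa x2)))))))"
    by (rule coassoc_h) (simp add: trilin_def bilin_def)
  also have "\<dots> = ssum (cop x)(\<lambda>a r. ssum (cop r)(\<lambda>c x2. ssum (cop y)(\<lambda>b s. ssum (cop s)(\<lambda>d y2.
          bu (Sa (act a b)) (bu c (bu (bu d (Sa y2)) (Sa x2)))))))"
    by (rule ssum_cong, rule ssum_cong, rule coassoc_h, simp add: trilin_def bilin_def)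
  also have "\<dots> = ssum (cop x)(\<lambda>a r. ssum (cop r)(\<lambda>c x2. ssum (cop y)(\<lambda>b s. sc (cou s) (
          bu (Sa (act a b)) (bu c (Sa x2))))))"
    by (simp add: antR flip: outs)
  also have "\<dots> = ssum (cop x)(\<lambda>a r. ssum (cop r)(\<lambda>c x2. bu (Sa (act a y)) (bu c (Sa x2))))"
    by (intro ssum_cong) (rule counitR_h, simp)
  also have "\<dots> = ssum (cop x)(\<lambda>a r. sc (cou r) (Sa (act a y)))"
    by (simp add: antR flip: outs)
  also have "\<dots> = Sa (act x y)"
    by (rule counitR_h) simp
  finally show ?thesis .
qed


lemma lh_bilin: "bilin sc sc sc lh"
proof -
  have "bilin sc sc sc (\<lambda>x y. ssum (cop x)(\<lambda>x1 x2. ssum (cop y)(\<lambda>y1 y2. bu (bu (Sa (act x1 y1)) x2) y2)))"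
    by (simp add: bilin_def)
  then show ?thesis by (simp add: lhp_eq[abs_def])
qed
lemma lin_lhL[simp]: "lin s sc f \<Longrightarrow> lin s sc (\<lambda>x. lh (f x) c)" by (rule lin_bilin_L[OF lh_bilin])
lemma lin_lhR[simp]: "lin s sc f \<Longrightarrow> lin s sc (\<lambda>x. lh c (f x))" by (rule lin_bilin_R[OF lh_bilin])

lemma P6b_sum: assumes W: "vector_space sW" and K: "bilin sc sc sW K"
  shows "ssum (cop x)(\<lambda>x1 x2. ssum (cop y)(\<lambda>y1 y2. K (act x1 y1) (lh x2 y2)))
       = ssum (cop x)(\<lambda>x1 x2. ssum (cop y)(\<lambda>y1 y2. K (act x2 y2) (lh x1 y1)))"
  using teq2_transfer[OF W P6b K] by simp

lemma bil_lins: "bilin s1 s2 s3 \<phi> \<Longrightarrow> lin s1 s3 (\<lambda>x. \<phi> x b)"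
   "bilin s1 s2 s3 \<phi> \<Longrightarrow> lin s2 s3 (\<lambda>x. \<phi> a x)"
  by (auto simp: bilin_def)

lemma YD_cond: "teq2 sc sc (rho (act a v))
            (lw3 cop a (\<lambda>a1 a2 a3. lsum (rho v) (\<lambda>h w. [(bu (bu a1 h) (Sa a3), act a2 w)])))"
proof (rule teq2I)
  fix \<phi> :: "'h \<Rightarrow> 'h \<Rightarrow> 'f" assume \<phi>: "bilin sc sc (*) \<phi>"
  note P = lin_comp[OF bil_lins(1)[OF \<phi>]] lin_comp[OF bil_lins(2)[OF \<phi>]]
  define E where "E = (\<lambda>x1 x2 x3 x4 y1 y2 y3 y4.
     \<phi> (bu (bu (bu (act x1 y1) (lh x2 y2)) (Sa y4)) (Sa x4)) (act x3 y3))"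
  have EL[simp]: "lin sc (*) (\<lambda>t. E t x2 x3 x4 y1 y2 y3 y4)" "lin sc (*) (\<lambda>t. E x1 t x3 x4 y1 y2 y3 y4)"
    "lin sc (*) (\<lambda>t. E x1 x2 t x4 y1 y2 y3 y4)" "lin sc (*) (\<lambda>t. E x1 x2 x3 t y1 y2 y3 y4)"
    "lin sc (*) (\<lambda>t. E x1 x2 x3 x4 t y2 y3 y4)" "lin sc (*) (\<lambda>t. E x1 x2 x3 x4 y1 t y3 y4)"
    "lin sc (*) (\<lambda>t. E x1 x2 x3 x4 y1 y2 t y4)" "lin sc (*) (\<lambda>t. E x1 x2 x3 x4 y1 y2 y3 t)"
    for x1 x2 x3 x4 y1 y2 y3 y4 unfolding E_def by (simp_all add: P)
  let ?G3 = "ssum (cop a)(\<lambda>a1 r. ssum (cop r)(\<lambda>a2 a3. ssum (cop v)(\<lambda>v1 s. ssum (cop s)(\<lambda>v2 v3.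
      \<phi> (bu (act a1 v1) (Sa (act a3 v3))) (act a2 v2)))))"
  have L: "ssum (rho (act a v)) \<phi> = ?G3"
  proof -
    have "ssum (rho (act a v)) \<phi> = ssum (cop a)(\<lambda>p a3. ssum (cop v)(\<lambda>q v3. ssum (cop p)(\<lambda>a1 a2. ssum (cop q)(\<lambda>v1 v2.
       \<phi> (bu (act a1 v1) (Sa (act a3 v3))) (act a2 v2)))))"
      unfolding rho_sum0 by (simp add: act_cop_sum[OF vs_field] bilin_def P)
    also have "\<dots> = ssum (cop a)(\<lambda>p a3. ssum (cop p)(\<lambda>a1 a2. ssum (cop v)(\<lambda>q v3. ssum (cop q)(\<lambda>v1 v2.
       \<phi> (bu (act a1 v1) (Sa (act a3 v3))) (act a2 v2)))))"
      by (intro ssum_cong) (rule ssum_swap)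
    also have "\<dots> = ssum (cop a)(\<lambda>a1 r. ssum (cop r)(\<lambda>a2 a3. ssum (cop v)(\<lambda>q v3. ssum (cop q)(\<lambda>v1 v2.
       \<phi> (bu (act a1 v1) (Sa (act a3 v3))) (act a2 v2)))))"
      by (rule coassoc_f) (simp add: trilin_def bilin_def P)
    also have "\<dots> = ?G3"
      by (rule ssum_cong, rule ssum_cong, rule coassoc_f) (simp add: trilin_def bilin_def P)
    finally show ?thesis .
  qed
  have R: "ssum (lw3 cop a (\<lambda>a1 a2 a3. lsum (rho v) (\<lambda>h w. [(bu (bu a1 h) (Sa a3), act a2 w)]))) \<phi> = ?G3"
  proof -
    have "ssum (lw3 cop a (\<lambda>a1 a2 a3. lsum (rho v) (\<lambda>h w. [(bu (bu a1 h) (Sa a3), act a2 w)]))) \<phi>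
      = ssum (cop a)(\<lambda>p a3. ssum (cop p)(\<lambda>a1 a2. ssum (cop v)(\<lambda>q v3. ssum (cop q)(\<lambda>v1 v2.
          \<phi> (bu (bu (bu a1 v1) (Sa v3)) (Sa a3)) (act a2 v2)))))"
      by (simp add: lw3_def rho_sum0 bu_assoc)
    also have "\<dots> = ssum (cop a)(\<lambda>a1 r. ssum (cop r)(\<lambda>a2 a3. ssum (cop v)(\<lambda>q v3. ssum (cop q)(\<lambda>v1 v2.
          \<phi> (bu (bu (bu a1 v1) (Sa v3)) (Sa a3)) (act a2 v2)))))"
      by (rule coassoc_f) (simp add: trilin_def bilin_def P)
    also have "\<dots> = ssum (cop a)(\<lambda>a1 r. ssum (cop r)(\<lambda>a2 a3. ssum (cop v)(\<lambda>v1 s. ssum (cop s)(\<lambda>v2 v3.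
          \<phi> (bu (bu (bu a1 v1) (Sa v3)) (Sa a3)) (act a2 v2)))))"
      by (rule ssum_cong, rule ssum_cong, rule coassoc_f) (simp add: trilin_def bilin_def P)
    also have "\<dots> = ssum (cop a)(\<lambda>a1 r. ssum (cop r)(\<lambda>a2 a3. ssum (cop v)(\<lambda>v1 s. ssum (cop s)(\<lambda>v2 v3.
          ssum (cop a1)(\<lambda>x1 x2. ssum (cop v1)(\<lambda>y1 y2. E x1 x2 a2 a3 y1 y2 v2 v3))))))"
      apply (intro ssum_cong)
      apply (subst F1)
      apply (simp add: E_def lin_ssum_outside[OF bil_lins(1)[OF \<phi>]] outs)
      done
    also have "\<dots> = ssum (cop a)(\<lambda>a1 r. ssum (cop r)(\<lambda>a2 a3. ssum (cop v)(\<lambda>v1 s. 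
          ssum (cop a1)(\<lambda>x1 x2. ssum (cop s)(\<lambda>v2 v3. ssum (cop v1)(\<lambda>y1 y2. E x1 x2 a2 a3 y1 y2 v2 v3))))))"
      by (intro ssum_cong) (rule ssum_swap)
    also have "\<dots> = ssum (cop a)(\<lambda>a1 r. ssum (cop r)(\<lambda>a2 a3. 
          ssum (cop a1)(\<lambda>x1 x2. ssum (cop v)(\<lambda>v1 s. ssum (cop s)(\<lambda>v2 v3. ssum (cop v1)(\<lambda>y1 y2. E x1 x2 a2 a3 y1 y2 v2 v3))))))"
      by (intro ssum_cong) (rule ssum_swap)
    also have "\<dots> = ssum (cop a)(\<lambda>a1 r. ssum (cop a1)(\<lambda>x1 x2. ssum (cop r)(\<lambda>a2 a3. 
          ssum (cop v)(\<lambda>v1 s. ssum (cop s)(\<lambda>v2 v3. ssum (cop v1)(\<lambda>y1 y2. E x1 x2 a2 a3 y1 y2 v2 v3))))))"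
      by (intro ssum_cong) (rule ssum_swap)
    also have "\<dots> = ssum (cop a)(\<lambda>x1 t. ssum (cop t)(\<lambda>x2 r. ssum (cop r)(\<lambda>a2 a3. 
          ssum (cop v)(\<lambda>v1 s. ssum (cop s)(\<lambda>v2 v3. ssum (cop v1)(\<lambda>y1 y2. E x1 x2 a2 a3 y1 y2 v2 v3))))))"
      by (rule coassoc_f) (simp add: trilin_def bilin_def)
    also have "\<dots> = ssum (cop a)(\<lambda>x1 t. ssum (cop t)(\<lambda>w x4. ssum (cop w)(\<lambda>x2 x3. 
          ssum (cop v)(\<lambda>v1 s. ssum (cop s)(\<lambda>v2 v3. ssum (cop v1)(\<lambda>y1 y2. E x1 x2 x3 x4 y1 y2 v2 v3))))))"
      by (rule ssum_cong, rule coassoc_f[symmetric]) (simp add: trilin_def bilin_def)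
    also have "\<dots> = ssum (cop a)(\<lambda>x1 t. ssum (cop t)(\<lambda>w x4. ssum (cop w)(\<lambda>x2 x3. 
          ssum (cop v)(\<lambda>v1 s. ssum (cop v1)(\<lambda>y1 y2. ssum (cop s)(\<lambda>v2 v3. E x1 x2 x3 x4 y1 y2 v2 v3))))))"
      by (intro ssum_cong) (rule ssum_swap)
    also have "\<dots> = ssum (cop a)(\<lambda>x1 t. ssum (cop t)(\<lambda>w x4. ssum (cop w)(\<lambda>x2 x3. 
          ssum (cop v)(\<lambda>y1 u. ssum (cop u)(\<lambda>y2 s. ssum (cop s)(\<lambda>v2 v3. E x1 x2 x3 x4 y1 y2 v2 v3))))))"
      by (rule ssum_cong, rule ssum_cong, rule ssum_cong, rule coassoc_f) (simp add: trilin_def bilin_def)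
    also have "\<dots> = ssum (cop a)(\<lambda>x1 t. ssum (cop t)(\<lambda>w x4. ssum (cop w)(\<lambda>x2 x3. 
          ssum (cop v)(\<lambda>y1 u. ssum (cop u)(\<lambda>z y4. ssum (cop z)(\<lambda>y2 y3. E x1 x2 x3 x4 y1 y2 y3 y4))))))"
      by (rule ssum_cong, rule ssum_cong, rule ssum_cong, rule ssum_cong, rule coassoc_f[symmetric]) (simp add: trilin_def bilin_def)
    also have "\<dots> = ssum (cop a)(\<lambda>x1 t. ssum (cop t)(\<lambda>w x4. 
          ssum (cop v)(\<lambda>y1 u. ssum (cop w)(\<lambda>x2 x3. ssum (cop u)(\<lambda>z y4. ssum (cop z)(\<lambda>y2 y3. E x1 x2 x3 x4 y1 y2 y3 y4))))))"
      by (intro ssum_cong) (rule ssum_swap)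
    also have "\<dots> = ssum (cop a)(\<lambda>x1 t. ssum (cop t)(\<lambda>w x4. 
          ssum (cop v)(\<lambda>y1 u. ssum (cop u)(\<lambda>z y4. ssum (cop w)(\<lambda>x2 x3. ssum (cop z)(\<lambda>y2 y3. E x1 x2 x3 x4 y1 y2 y3 y4))))))"
      by (intro ssum_cong) (rule ssum_swap)
    also have "\<dots> = ssum (cop a)(\<lambda>x1 t. ssum (cop t)(\<lambda>w x4. 
          ssum (cop v)(\<lambda>y1 u. ssum (cop u)(\<lambda>z y4. ssum (cop w)(\<lambda>x2 x3. ssum (cop z)(\<lambda>y2 y3. E x1 x3 x2 x4 y1 y3 y2 y4))))))"
      apply (rule ssum_cong, rule ssum_cong, rule ssum_cong, rule ssum_cong)
      subgoal for x1 t w x4 y1 u z y4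
        unfolding E_def
        by (rule P6b_sum[OF vs_field, where K="\<lambda>p q. \<phi> (bu (bu (bu (act x1 y1) q) (Sa y4)) (Sa x4)) p", symmetric])
           (simp add: bilin_def P)
      done
    also have "\<dots> = ssum (cop a)(\<lambda>x1 t. ssum (cop t)(\<lambda>w x4. ssum (cop w)(\<lambda>x2 x3. 
          ssum (cop v)(\<lambda>y1 u. ssum (cop u)(\<lambda>z y4. ssum (cop z)(\<lambda>y2 y3. E x1 x3 x2 x4 y1 y3 y2 y4))))))"
      by (intro ssum_cong) (subst ssum_swap, intro ssum_cong, rule ssum_swap)
    also have "\<dots> = ssum (cop a)(\<lambda>x1 t. ssum (cop t)(\<lambda>x2 m. ssum (cop m)(\<lambda>x3 x4. 
          ssum (cop v)(\<lambda>y1 u. ssum (cop u)(\<lambda>z y4. ssum (cop z)(\<lambda>y2 y3. E x1 x3 x2 x4 y1 y3 y2 y4))))))"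
      by (rule ssum_cong, rule coassoc_f) (simp add: trilin_def bilin_def)
    also have "\<dots> = ssum (cop a)(\<lambda>x1 t. ssum (cop t)(\<lambda>x2 m. ssum (cop m)(\<lambda>x3 x4. 
          ssum (cop v)(\<lambda>y1 u. ssum (cop u)(\<lambda>y2 n. ssum (cop n)(\<lambda>y3 y4. E x1 x3 x2 x4 y1 y3 y2 y4))))))"
      by (rule ssum_cong, rule ssum_cong, rule ssum_cong, rule ssum_cong, rule coassoc_f) (simp add: trilin_def bilin_def)
    also have "\<dots> = ssum (cop a)(\<lambda>x1 t. ssum (cop t)(\<lambda>x2 m.
          ssum (cop v)(\<lambda>y1 u. ssum (cop u)(\<lambda>y2 n. ssum (cop m)(\<lambda>x3 x4. ssum (cop n)(\<lambda>y3 y4. E x1 x3 x2 x4 y1 y3 y2 y4))))))"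
      by (intro ssum_cong) (subst ssum_swap, intro ssum_cong, rule ssum_swap)
    also have "\<dots> = ?G3"
      apply (intro ssum_cong)
      apply (unfold E_def)
      apply (simp add: bu_assoc flip: F2 lin_ssum_outside[OF bil_lins(1)[OF \<phi>]] outs)
      done
    finally show ?thesis .
  qed
  show "ssum (rho (act a v)) \<phi> = ssum (lw3 cop a (\<lambda>a1 a2 a3. lsum (rho v) (\<lambda>h w. [(bu (bu a1 h) (Sa a3), act a2 w)]))) \<phi>"
    using L R by simp
qed


lemma counit2R_h: assumes B: "bilin sc sc sc B"
  shows "ssum (cop x)(\<lambda>x1 r. ssum (cop y)(\<lambda>y1 s. sc (cou r * cou s) (B x1 y1))) = B x y"
proof -
  have "ssum (cop x)(\<lambda>x1 r. ssum (cop y)(\<lambda>y1 s. sc (cou r * cou s) (B x1 y1)))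
      = ssum (cop x)(\<lambda>x1 r. sc (cou r) (ssum (cop y)(\<lambda>y1 s. sc (cou s) (B x1 y1))))"
    by (simp only: sc_mult ssum_sc_out)
  also have "\<dots> = ssum (cop y)(\<lambda>y1 s. sc (cou s) (B x y1))"
    by (rule counitR_h) (simp add: lin_comp[OF bilinD2[OF B]] lin_comp[OF bilinD1[OF B]])
  also have "\<dots> = B x y" by (rule counitR_h) (simp add: lin_comp[OF bilinD1[OF B]])
  finally show ?thesis .
qed

lemma Sa_bu: "Sa (bu x y) = bu (Sa y) (Sa x)"
proof -
  define T where "T = ssum (cop x)(\<lambda>x1 r. ssum (cop y)(\<lambda>y1 s. ssum (cop r)(\<lambda>x2 x3. ssum (cop s)(\<lambda>y2 y3.
        bu (bu (Sa y1) (Sa x1)) (bu (bu x2 y2) (Sa (bu x3 y3)))))))"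
  have "T = ssum (cop x)(\<lambda>x1 r. ssum (cop y)(\<lambda>y1 s. bu (bu (Sa y1) (Sa x1)) (ssum (cop (bu r s)) (\<lambda>z1 z2. bu z1 (Sa z2)))))"
    unfolding T_def by (simp add: cop_bu[OF vs] bilin_def flip: outs)
  also have "\<dots> = ssum (cop x)(\<lambda>x1 r. ssum (cop y)(\<lambda>y1 s. sc (cou r * cou s) (bu (Sa y1) (Sa x1))))"
    by (simp add: antR cou_bu)
  also have "\<dots> = bu (Sa y) (Sa x)"
    by (rule counit2R_h) (simp add: bilin_def)
  finally have T1: "T = bu (Sa y) (Sa x)" .
  have "T = ssum (cop x)(\<lambda>x1 r. ssum (cop r)(\<lambda>x2 x3. ssum (cop y)(\<lambda>y1 s. ssum (cop s)(\<lambda>y2 y3.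
        bu (bu (Sa y1) (bu (bu (Sa x1) x2) y2)) (Sa (bu x3 y3))))))"
    unfolding T_def by (intro ssum_cong) (subst ssum_swap, simp add: bu_assoc)
  also have "\<dots> = ssum (cop x)(\<lambda>p x3. ssum (cop p)(\<lambda>x1 x2. ssum (cop y)(\<lambda>y1 s. ssum (cop s)(\<lambda>y2 y3.
        bu (bu (Sa y1) (bu (bu (Sa x1) x2) y2)) (Sa (bu x3 y3))))))"
    by (rule coassoc_h[symmetric]) (simp add: trilin_def bilin_def)
  also have "\<dots> = ssum (cop x)(\<lambda>p x3. ssum (cop p)(\<lambda>x1 x2. ssum (cop y)(\<lambda>q y3. ssum (cop q)(\<lambda>y1 y2.
        bu (bu (Sa y1) (bu (bu (Sa x1) x2) y2)) (Sa (bu x3 y3))))))"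
    by (rule ssum_cong, rule ssum_cong, rule coassoc_h[symmetric]) (simp add: trilin_def bilin_def)
  also have "\<dots> = ssum (cop x)(\<lambda>p x3. ssum (cop y)(\<lambda>q y3. ssum (cop q)(\<lambda>y1 y2. ssum (cop p)(\<lambda>x1 x2.
        bu (bu (Sa y1) (bu (bu (Sa x1) x2) y2)) (Sa (bu x3 y3))))))"
    by (intro ssum_cong) (subst ssum_swap, intro ssum_cong, rule ssum_swap)
  also have "\<dots> = ssum (cop x)(\<lambda>p x3. ssum (cop y)(\<lambda>q y3. sc (cou p * cou q) (Sa (bu x3 y3))))"
    by (simp add: antL ssum_sc_out flip: outs)
  also have "\<dots> = Sa (bu x y)"
    by (rule counit2_h) (simp add: bilin_def)
  finally show ?thesis using T1 by simp
qed

lemma M1: "mul x y = ssum (cop x)(\<lambda>a b. bu a (act (Sa b) y))"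
proof -
  have "ssum (cop x)(\<lambda>a b. bu a (act (Sa b) y)) = ssum (cop x)(\<lambda>a b. ssum (cop a)(\<lambda>a1 a2. mul a1 (act (bu a2 (Sa b)) y)))"
    unfolding bul_eq[of _ "act _ y"] by (simp add: P2)
  also have "\<dots> = ssum (cop x)(\<lambda>a1 r. ssum (cop r)(\<lambda>a2 b. mul a1 (act (bu a2 (Sa b)) y)))"
    by (rule coassoc_h) (simp add: trilin_def bilin_def)
  also have "\<dots> = mul x y"
    by (simp add: antR flip: outs)
  finally show ?thesis by simp
qed


lemma rho_lin: "vector_space sW \<Longrightarrow> bilin sc sc sW G \<Longrightarrow> lin sc sW (\<lambda>u. ssum (rho u) G)"
proof -
  assume W: "vector_space sW" and G: "bilin sc sc sW G"
  note [simp] = W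
  have G1: "lin sc sW (\<lambda>w. G w z)" for z using G by (simp add: bilin_def)
  have G2: "lin sc sW (G w)" for w using G by (simp add: bilin_def)
  show ?thesis unfolding rho_sum0 by (simp add: bilin_def lin_comp[OF G1] lin_comp[OF G2])
qed

lemma rho_bu: assumes G: "bilin sc sc (*) G"
  shows "ssum (rho (bu p w)) G = ssum (cop p)(\<lambda>p1 r. ssum (cop r)(\<lambda>p2 p3. ssum (rho w)(\<lambda>h v. G (bu (bu p1 h) (Sa p3)) (bu p2 v))))"
proof -
  note P = lin_comp[OF bil_lins(1)[OF G]] lin_comp[OF bil_lins(2)[OF G]]
  have "ssum (rho (bu p w)) G = ssum (cop p)(\<lambda>pa p3. ssum (cop w)(\<lambda>wa w3. ssum (cop pa)(\<lambda>p1 p2. ssum (cop wa)(\<lambda>w1 w2.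
          G (bu (bu p1 (bu w1 (Sa w3))) (Sa p3)) (bu p2 w2)))))"
    unfolding rho_sum0 by (simp add: cop_bu[OF vs_field] bilin_def P Sa_bu bu_assoc)
  also have "\<dots> = ssum (cop p)(\<lambda>pa p3. ssum (cop pa)(\<lambda>p1 p2. ssum (cop w)(\<lambda>wa w3. ssum (cop wa)(\<lambda>w1 w2.
          G (bu (bu p1 (bu w1 (Sa w3))) (Sa p3)) (bu p2 w2)))))"
    by (intro ssum_cong) (rule ssum_swap)
  also have "\<dots> = ssum (cop p)(\<lambda>p1 r. ssum (cop r)(\<lambda>p2 p3. ssum (cop w)(\<lambda>wa w3. ssum (cop wa)(\<lambda>w1 w2.
          G (bu (bu p1 (bu w1 (Sa w3))) (Sa p3)) (bu p2 w2)))))"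
    by (rule coassoc_f) (simp add: trilin_def bilin_def P)
  also have "\<dots> = ssum (cop p)(\<lambda>p1 r. ssum (cop r)(\<lambda>p2 p3. ssum (rho w)(\<lambda>h v. G (bu (bu p1 h) (Sa p3)) (bu p2 v))))"
    unfolding rho_sum0 by simp
  finally show ?thesis .
qed

lemma YD_sum: assumes G: "bilin sc sc (*) G"
  shows "ssum (rho (act a v)) G = ssum (cop a)(\<lambda>p a3. ssum (cop p)(\<lambda>a1 a2. ssum (rho v)(\<lambda>h w. G (bu (bu a1 h) (Sa a3)) (act a2 w))))"
  using teq2_transfer[OF vs_field YD_cond G] by (simp add: lw3_def)


lemma rho_mul: "teq2 sc sc (rho (mul x y)) (lsum (rho x) (\<lambda>h v. lsum (rho y) (\<lambda>h' w. [(bu h h', mul v w)])))"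
proof (rule teq2I)
  fix \<phi> :: "'h \<Rightarrow> 'h \<Rightarrow> 'f" assume \<phi>: "bilin sc sc (*) \<phi>"
  note P = lin_comp[OF bil_lins(1)[OF \<phi>]] lin_comp[OF bil_lins(2)[OF \<phi>]]
  let ?N = "ssum (cop x)(\<lambda>a1 t. ssum (cop t)(\<lambda>a2 s. ssum (cop s)(\<lambda>c d. ssum (rho y)(\<lambda>k u.
      \<phi> (bu (bu a1 (Sa d)) k) (bu a2 (act (Sa c) u))))))"
  have rl: "lin sc (*) (\<lambda>u. ssum (rho u) G)" if "bilin sc sc (*) G" for G
    by (rule rho_lin[OF vs_field that])
  have "ssum (rho (mul x y)) \<phi> = ssum (cop x)(\<lambda>a b. ssum (rho (bu a (act (Sa b) y))) \<phi>)"
    unfolding M1[of x y] by (rule lin_ssum_outside[OF rl[OF \<phi>]])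
  also have "\<dots> = ssum (cop x)(\<lambda>a b. ssum (cop a)(\<lambda>a1 r. ssum (cop r)(\<lambda>a2 a3.
       ssum (cop b)(\<lambda>b1 b2. ssum (cop b2)(\<lambda>c d. ssum (rho y)(\<lambda>k u.
         \<phi> (bu (bu (bu a1 (Sa d)) k) (Sa (bu a3 (Sa b1)))) (bu a2 (act (Sa c) u))))))))"
    apply (rule ssum_cong)
    apply (subst rho_bu[OF \<phi>])
    apply (simp add: YD_sum bilin_def P P6a_sum[OF vs_field] Sa_bu bu_assoc rho_lin[OF vs_field])
    done
  also have "\<dots> = ssum (cop x)(\<lambda>a1 t. ssum (cop t)(\<lambda>r b. ssum (cop r)(\<lambda>a2 a3.
       ssum (cop b)(\<lambda>b1 b2. ssum (cop b2)(\<lambda>c d. ssum (rho y)(\<lambda>k u.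
         \<phi> (bu (bu (bu a1 (Sa d)) k) (Sa (bu a3 (Sa b1)))) (bu a2 (act (Sa c) u))))))))"
    by (rule coassoc_f) (simp add: trilin_def bilin_def P rho_lin[OF vs_field])
  also have "\<dots> = ssum (cop x)(\<lambda>a1 t. ssum (cop t)(\<lambda>a2 t2. ssum (cop t2)(\<lambda>a3 b.
       ssum (cop b)(\<lambda>b1 b2. ssum (cop b2)(\<lambda>c d. ssum (rho y)(\<lambda>k u.
         \<phi> (bu (bu (bu a1 (Sa d)) k) (Sa (bu a3 (Sa b1)))) (bu a2 (act (Sa c) u))))))))"
    by (rule ssum_cong, rule coassoc_f) (simp add: trilin_def bilin_def P rho_lin[OF vs_field])
  also have "\<dots> = ssum (cop x)(\<lambda>a1 t. ssum (cop t)(\<lambda>a2 t2. ssum (cop t2)(\<lambda>m b2. ssum (cop m)(\<lambda>a3 b1.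
       ssum (cop b2)(\<lambda>c d. ssum (rho y)(\<lambda>k u.
         \<phi> (bu (bu (bu a1 (Sa d)) k) (Sa (bu a3 (Sa b1)))) (bu a2 (act (Sa c) u))))))))"
    by (rule ssum_cong, rule ssum_cong, rule coassoc_f[symmetric]) (simp add: trilin_def bilin_def P rho_lin[OF vs_field])
  also have "\<dots> = ssum (cop x)(\<lambda>a1 t. ssum (cop t)(\<lambda>a2 t2. ssum (cop t2)(\<lambda>m b2.
       ssum (cop b2)(\<lambda>c d. ssum (rho y)(\<lambda>k u. ssum (cop m)(\<lambda>a3 b1.
         \<phi> (bu (bu (bu a1 (Sa d)) k) (Sa (bu a3 (Sa b1)))) (bu a2 (act (Sa c) u))))))))"
    by (intro ssum_cong) (subst ssum_swap, intro ssum_cong, rule ssum_swap)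
  also have "\<dots> = ssum (cop x)(\<lambda>a1 t. ssum (cop t)(\<lambda>a2 t2. ssum (cop t2)(\<lambda>m b2. cou m *
       ssum (cop b2)(\<lambda>c d. ssum (rho y)(\<lambda>k u.
         \<phi> (bu (bu a1 (Sa d)) k) (bu a2 (act (Sa c) u)))))))"
    by (simp add: antR bilin_scL[OF \<phi>] ssum_scale[OF vs_field]
        flip: outs lin_ssum_outside[OF bil_lins(1)[OF \<phi>]])
  also have "\<dots> = ?N"
    by (rule ssum_cong, rule ssum_cong, rule counitL_f, simp add: bilin_def P rho_lin[OF vs_field])
  finally have L: "ssum (rho (mul x y)) \<phi> = ?N" .
  have "ssum (lsum (rho x) (\<lambda>h v. lsum (rho y) (\<lambda>h' w. [(bu h h', mul v w)]))) \<phi>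
     = ssum (cop x)(\<lambda>p x3. ssum (cop p)(\<lambda>x1 x2. ssum (cop x2)(\<lambda>e f. ssum (rho y)(\<lambda>k u.
          \<phi> (bu (bu x1 (Sa x3)) k) (bu e (act (Sa f) u))))))"
    apply (simp add: rho_sum0[of x])
    apply (intro ssum_cong)
    apply (subst M1)
    apply (simp add: lin_ssum_outside[OF bil_lins(2)[OF \<phi>]])
    apply (rule ssum_swap)
    done
  also have "\<dots> = ssum (cop x)(\<lambda>x1 t. ssum (cop t)(\<lambda>x2 x3. ssum (cop x2)(\<lambda>e f. ssum (rho y)(\<lambda>k u.
          \<phi> (bu (bu x1 (Sa x3)) k) (bu e (act (Sa f) u))))))"
    by (rule coassoc_f) (simp add: trilin_def bilin_def P rho_lin[OF vs_field])
  also have "\<dots> = ?N"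
    by (rule ssum_cong, rule coassoc_f) (simp add: trilin_def bilin_def P rho_lin[OF vs_field])
  finally show "ssum (rho (mul x y)) \<phi> = ssum (lsum (rho x) (\<lambda>h v. lsum (rho y) (\<lambda>h' w. [(bu h h', mul v w)]))) \<phi>"
    using L by simp
qed


lemma rho_add: "teq2 sc sc (rho (v + w)) (rho v @ rho w)"
  by (rule teq2I) (simp add: lin_add[OF rho_lin[OF vs_field]])

lemma rho_scale: "teq2 sc sc (rho (sc c v)) (map (\<lambda>(h, w). (sc c h, w)) (rho v))"
proof (rule teq2I)
  fix \<phi> :: "'h \<Rightarrow> 'h \<Rightarrow> 'f" assume \<phi>: "bilin sc sc (*) \<phi>"
  show "ssum (rho (sc c v)) \<phi> = ssum (map (\<lambda>(h, w). (sc c h, w)) (rho v)) \<phi>"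
    by (simp add: ssum_map1 lin_scale[OF rho_lin[OF vs_field \<phi>]] bilin_scL[OF \<phi>] ssum_scale[OF vs_field])
qed

lemma counit_c: "ssum (cop a) (\<lambda>a1 a2. sc (c * cou a1) a2) = sc c a"
  by (simp only: sc_mult ssum_sc_out counit_raw)

lemma rho_counit: "ssum (rho v) (\<lambda>h w. sc (cou h) w) = v"
proof -
  have "ssum (rho v) (\<lambda>h w. sc (cou h) w) = ssum (cop v)(\<lambda>p a3. ssum (cop p)(\<lambda>a1 a2. sc (cou (bu a1 (Sa a3))) a2))"
    by (simp add: rho_sum0)
  also have "\<dots> = ssum (cop v)(\<lambda>p a3. sc (cou a3) (ssum (cop p)(\<lambda>a1 a2. sc (cou a1) a2)))"
    by (intro ssum_cong) (simp add: cou_bu mult.commute counit_c)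
  also have "\<dots> = v" by (simp add: counit_raw)
  finally show ?thesis .
qed

lemma rho_one: "teq2 sc sc (rho one) [(one, one)]"
proof (rule teq2I)
  fix \<phi> :: "'h \<Rightarrow> 'h \<Rightarrow> 'f" assume \<phi>: "bilin sc sc (*) \<phi>"
  note P = lin_comp[OF bil_lins(1)[OF \<phi>]] lin_comp[OF bil_lins(2)[OF \<phi>]]
  show "ssum (rho one) \<phi> = ssum [(one, one)] \<phi>"
    by (simp add: rho_sum0 bilin_def P)
qed

lemma rho_cou: "ssum (rho x) (\<lambda>h v. sc (cou v) h) = sc (cou x) one"
proof -
  have "ssum (rho x) (\<lambda>h v. sc (cou v) h) = ssum (cop x)(\<lambda>p a3. ssum (cop p)(\<lambda>a1 a2. sc (cou a2) (bu a1 (Sa a3))))"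
    by (simp add: rho_sum0)
  also have "\<dots> = ssum (cop x)(\<lambda>p a3. bu p (Sa a3))"
    by (rule ssum_cong) (rule counitR_h, simp)
  finally show ?thesis by (simp add: antR)
qed

lemma cop_comod: "teq3 sc sc sc
          (lsum (rho x) (\<lambda>h v. map (\<lambda>(v1, v2). (h, v1, v2)) (cop v)))
          (lsum (cop x) (\<lambda>x1 x2. lsum (rho x1) (\<lambda>h v. lsum (rho x2) (\<lambda>h' w.
              [(bu h h', v, w)]))))"
proof (rule teq3I)
  fix \<phi> :: "'h \<Rightarrow> 'h \<Rightarrow> 'h \<Rightarrow> 'f" assume \<phi>: "trilin sc sc sc (*) \<phi>"
  note P = lin_comp[OF tri_lins(1)[OF \<phi>]] lin_comp[OF tri_lins(2)[OF \<phi>]] lin_comp[OF tri_lins(3)[OF \<phi>]]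
  let ?N = "ssum (cop x)(\<lambda>a1 t. ssum (cop t)(\<lambda>a2 s. ssum (cop s)(\<lambda>b2 b3. \<phi> (bu a1 (Sa b3)) a2 b2)))"
  have "ssum3 (lsum (rho x) (\<lambda>h v. map (\<lambda>(v1, v2). (h, v1, v2)) (cop v))) \<phi>
     = ssum (cop x)(\<lambda>p x3. ssum (cop p)(\<lambda>x1 x2. ssum (cop x2)(\<lambda>c d. \<phi> (bu x1 (Sa x3)) c d)))"
    by (simp add: rho_sum0)
  also have "\<dots> = ssum (cop x)(\<lambda>x1 t. ssum (cop t)(\<lambda>x2 x3. ssum (cop x2)(\<lambda>c d. \<phi> (bu x1 (Sa x3)) c d)))"
    by (rule coassoc_f) (simp add: trilin_def bilin_def P)
  also have "\<dots> = ?N"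
    by (rule ssum_cong, rule coassoc_f) (simp add: trilin_def bilin_def P)
  finally have L: "ssum3 (lsum (rho x) (\<lambda>h v. map (\<lambda>(v1, v2). (h, v1, v2)) (cop v))) \<phi> = ?N" .
  have "ssum3 (lsum (cop x) (\<lambda>x1 x2. lsum (rho x1) (\<lambda>h v. lsum (rho x2) (\<lambda>h' w. [(bu h h', v, w)])))) \<phi>
     = ssum (cop x)(\<lambda>a b. ssum (cop a)(\<lambda>a1 r. ssum (cop r)(\<lambda>a2 a3. ssum (cop b)(\<lambda>b1 s. ssum (cop s)(\<lambda>b2 b3.
         \<phi> (bu a1 (bu (bu (Sa a3) b1) (Sa b3))) a2 b2)))))"
    by (simp add: rho_sum[OF vs_field] bilin_def P bu_assoc)
  also have "\<dots> = ssum (cop x)(\<lambda>a1 t. ssum (cop t)(\<lambda>r b. ssum (cop r)(\<lambda>a2 a3. ssum (cop b)(\<lambda>b1 s. ssum (cop s)(\<lambda>b2 b3.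
         \<phi> (bu a1 (bu (bu (Sa a3) b1) (Sa b3))) a2 b2)))))"
    by (rule coassoc_f) (simp add: trilin_def bilin_def P)
  also have "\<dots> = ssum (cop x)(\<lambda>a1 t. ssum (cop t)(\<lambda>a2 t2. ssum (cop t2)(\<lambda>a3 b. ssum (cop b)(\<lambda>b1 s. ssum (cop s)(\<lambda>b2 b3.
         \<phi> (bu a1 (bu (bu (Sa a3) b1) (Sa b3))) a2 b2)))))"
    by (rule ssum_cong, rule coassoc_f) (simp add: trilin_def bilin_def P)
  also have "\<dots> = ssum (cop x)(\<lambda>a1 t. ssum (cop t)(\<lambda>a2 t2. ssum (cop t2)(\<lambda>m s. ssum (cop m)(\<lambda>a3 b1. ssum (cop s)(\<lambda>b2 b3.
         \<phi> (bu a1 (bu (bu (Sa a3) b1) (Sa b3))) a2 b2)))))"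
    by (rule ssum_cong, rule ssum_cong, rule coassoc_f[symmetric]) (simp add: trilin_def bilin_def P)
  also have "\<dots> = ssum (cop x)(\<lambda>a1 t. ssum (cop t)(\<lambda>a2 t2. ssum (cop t2)(\<lambda>m s. ssum (cop s)(\<lambda>b2 b3. ssum (cop m)(\<lambda>a3 b1.
         \<phi> (bu a1 (bu (bu (Sa a3) b1) (Sa b3))) a2 b2)))))"
    by (intro ssum_cong) (rule ssum_swap)
  also have "\<dots> = ssum (cop x)(\<lambda>a1 t. ssum (cop t)(\<lambda>a2 t2. ssum (cop t2)(\<lambda>m s. cou m * ssum (cop s)(\<lambda>b2 b3.
         \<phi> (bu a1 (Sa b3)) a2 b2))))"
    by (simp add: antL ssum_scale[OF vs_field] lin_scale[OF tri_lins(1)[OF \<phi>]]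
        flip: outs lin_ssum_outside[OF tri_lins(1)[OF \<phi>]])
  also have "\<dots> = ?N"
    by (rule ssum_cong, rule ssum_cong, rule counitL_f, simp add: P bilin_def)
  finally show "ssum3 (lsum (rho x) (\<lambda>h v. map (\<lambda>(v1, v2). (h, v1, v2)) (cop v))) \<phi> =
         ssum3 (lsum (cop x) (\<lambda>x1 x2. lsum (rho x1) (\<lambda>h v. lsum (rho x2) (\<lambda>h' w. [(bu h h', v, w)])))) \<phi>"
    using L by simp
qed


lemma braided: "teq2 sc sc (cop (mul x y))
          (lsum (cop x) (\<lambda>x1 x2. lsum (cop y) (\<lambda>y1 y2. lsum (rho x2) (\<lambda>h v.
              [(mul x1 (act h y1), mul v y2)]))))"
proof (rule teq2I)
  fix \<phi> :: "'h \<Rightarrow> 'h \<Rightarrow> 'f" assume \<phi>: "bilin sc sc (*) \<phi>"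
  note P = lin_comp[OF bil_lins(1)[OF \<phi>]] lin_comp[OF bil_lins(2)[OF \<phi>]]
  let ?N = "ssum (cop x)(\<lambda>x1 t. ssum (cop t)(\<lambda>x2 b. ssum (cop b)(\<lambda>x3 x4. ssum (cop y)(\<lambda>y1 y2.
       \<phi> (mul x1 (act x2 (\<beta> x4 y1))) (mul x3 y2)))))"
  have L: "ssum (cop (mul x y)) \<phi> = ?N"
    unfolding P5_sum[OF vs_field \<phi>] by (rule coassoc_f) (simp add: trilin_def bilin_def P)
  have "ssum (lsum (cop x) (\<lambda>x1 x2. lsum (cop y) (\<lambda>y1 y2. lsum (rho x2) (\<lambda>h v.
              [(mul x1 (act h y1), mul v y2)])))) \<phi>
      = ssum (cop x)(\<lambda>x1 x2. ssum (cop y)(\<lambda>y1 y2. ssum (cop x2)(\<lambda>m r. ssum (cop m)(\<lambda>p q.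
          \<phi> (mul x1 (act p (\<beta> r y1))) (mul q y2)))))"
    by (simp add: rho_sum0 flip: P2 act_Sa)
  also have "\<dots> = ssum (cop x)(\<lambda>x1 x2. ssum (cop x2)(\<lambda>m r. ssum (cop m)(\<lambda>p q. ssum (cop y)(\<lambda>y1 y2.
          \<phi> (mul x1 (act p (\<beta> r y1))) (mul q y2)))))"
    by (intro ssum_cong) (subst ssum_swap, intro ssum_cong, rule ssum_swap)
  also have "\<dots> = ?N"
    by (rule ssum_cong, rule coassoc_f) (simp add: trilin_def bilin_def P)
  finally show "ssum (cop (mul x y)) \<phi> = ssum (lsum (cop x) (\<lambda>x1 x2. lsum (cop y) (\<lambda>y1 y2. lsum (rho x2) (\<lambda>h v.
              [(mul x1 (act h y1), mul v y2)])))) \<phi>" using L by simp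
qed

lemma RB2: "teq2 sc sc
          (lw3 cop a (\<lambda>a1 a2 a3. lw3 cop b (\<lambda>b1 b2 b3.
             [(bu (bu (Sa (act a1 b1)) a2) b2, act a3 b3)])))
          (lw3 cop a (\<lambda>a1 a2 a3. lw3 cop b (\<lambda>b1 b2 b3.
             [(bu (bu (Sa (act a2 b2)) a3) b3, act a1 b1)])))"
proof (rule teq2I)
  fix \<phi> :: "'h \<Rightarrow> 'h \<Rightarrow> 'f" assume \<phi>: "bilin sc sc (*) \<phi>"
  note P = lin_comp[OF bil_lins(1)[OF \<phi>]] lin_comp[OF bil_lins(2)[OF \<phi>]]
  let ?N = "ssum (cop a)(\<lambda>p a3. ssum (cop b)(\<lambda>q b3. \<phi> (lh a3 b3) (act p q)))"
  have "ssum (lw3 cop a (\<lambda>a1 a2 a3. lw3 cop b (\<lambda>b1 b2 b3.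
             [(bu (bu (Sa (act a1 b1)) a2) b2, act a3 b3)]))) \<phi>
     = ssum (cop a)(\<lambda>p a3. ssum (cop p)(\<lambda>a1 a2. ssum (cop b)(\<lambda>q b3. ssum (cop q)(\<lambda>b1 b2.
          \<phi> (bu (bu (Sa (act a1 b1)) a2) b2) (act a3 b3)))))"
    by (simp add: lw3_def)
  also have "\<dots> = ssum (cop a)(\<lambda>p a3. ssum (cop b)(\<lambda>q b3. ssum (cop p)(\<lambda>a1 a2. ssum (cop q)(\<lambda>b1 b2.
          \<phi> (bu (bu (Sa (act a1 b1)) a2) b2) (act a3 b3)))))"
    by (intro ssum_cong) (rule ssum_swap)
  also have "\<dots> = ssum (cop a)(\<lambda>p a3. ssum (cop b)(\<lambda>q b3. \<phi> (lh p q) (act a3 b3)))"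
    unfolding lhp_eq by (simp flip: lin_ssum_outside[OF bil_lins(1)[OF \<phi>]])
  also have "\<dots> = ?N"
    by (rule P6b_sum[OF vs_field, where K="\<lambda>r s. \<phi> s r", symmetric]) (simp add: bilin_def P)
  finally have L: "ssum (lw3 cop a (\<lambda>a1 a2 a3. lw3 cop b (\<lambda>b1 b2 b3.
             [(bu (bu (Sa (act a1 b1)) a2) b2, act a3 b3)]))) \<phi> = ?N" .
  have "ssum (lw3 cop a (\<lambda>a1 a2 a3. lw3 cop b (\<lambda>b1 b2 b3.
             [(bu (bu (Sa (act a2 b2)) a3) b3, act a1 b1)]))) \<phi>
     = ssum (cop a)(\<lambda>p a3. ssum (cop p)(\<lambda>a1 a2. ssum (cop b)(\<lambda>q b3. ssum (cop q)(\<lambda>b1 b2.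
          \<phi> (bu (bu (Sa (act a2 b2)) a3) b3) (act a1 b1)))))"
    by (simp add: lw3_def)
  also have "\<dots> = ssum (cop a)(\<lambda>a1 t. ssum (cop t)(\<lambda>a2 a3. ssum (cop b)(\<lambda>q b3. ssum (cop q)(\<lambda>b1 b2.
          \<phi> (bu (bu (Sa (act a2 b2)) a3) b3) (act a1 b1)))))"
    by (rule coassoc_f) (simp add: trilin_def bilin_def P)
  also have "\<dots> = ssum (cop a)(\<lambda>a1 t. ssum (cop t)(\<lambda>a2 a3. ssum (cop b)(\<lambda>b1 s. ssum (cop s)(\<lambda>b2 b3.
          \<phi> (bu (bu (Sa (act a2 b2)) a3) b3) (act a1 b1)))))"
    by (rule ssum_cong, rule ssum_cong, rule coassoc_f) (simp add: trilin_def bilin_def P)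
  also have "\<dots> = ssum (cop a)(\<lambda>a1 t. ssum (cop b)(\<lambda>b1 s. ssum (cop t)(\<lambda>a2 a3. ssum (cop s)(\<lambda>b2 b3.
          \<phi> (bu (bu (Sa (act a2 b2)) a3) b3) (act a1 b1)))))"
    by (intro ssum_cong) (rule ssum_swap)
  also have "\<dots> = ?N"
    unfolding lhp_eq by (simp flip: lin_ssum_outside[OF bil_lins(1)[OF \<phi>]])
  finally show "ssum (lw3 cop a (\<lambda>a1 a2 a3. lw3 cop b (\<lambda>b1 b2 b3.
             [(bu (bu (Sa (act a1 b1)) a2) b2, act a3 b3)]))) \<phi> =
       ssum (lw3 cop a (\<lambda>a1 a2 a3. lw3 cop b (\<lambda>b1 b2 b3.
             [(bu (bu (Sa (act a2 b2)) a3) b3, act a1 b1)]))) \<phi>" using L by simp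
qed

lemma act_Sa_sum: "ssum (cop x)(\<lambda>a b. act a (Sa b)) = ant x"
proof -
  have "ssum (cop x)(\<lambda>a b. act a (Sa b)) = ssum (cop x)(\<lambda>a r. ssum (cop r)(\<lambda>c d. act a (\<beta> c (ant d))))"
    unfolding Sa_eq by (simp add: outs)
  also have "\<dots> = ssum (cop x)(\<lambda>u d. ssum (cop u)(\<lambda>a c. act a (\<beta> c (ant d))))"
    by (rule coassoc_h[symmetric]) (simp add: trilin_def bilin_def)
  also have "\<dots> = ant x" by (simp add: conv1)
  finally show ?thesis .
qed

lemma RB3: "sw3 cop a (\<lambda>a1 a2 a3. mul (act a1 (Sa a2)) a3) = sc (cou a) one"
proof -
  have "sw3 cop a (\<lambda>a1 a2 a3. mul (act a1 (Sa a2)) a3) = ssum (cop a)(\<lambda>p a3. mul (ant p) a3)"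
    unfolding sw3_def by (simp add: act_Sa_sum flip: outs)
  then show ?thesis by (simp add: ant_prop)
qed


abbreviation "B \<equiv> sub_hopf A act"
lemma B_simps[simp]: "h_sc B = sc" "h_mul B = bu" "h_one B = one" "h_cop B = cop" "h_cou B = cou" "h_ant B = Sa"
  by (simp_all add: sub_hopf_def)

lemma hopfB: "is_hopf_algebra B"
proof -
  have a: "is_algebra B" unfolding is_algebra_def
    by (simp add: vs bu_bilin bu_assoc)
  have c: "is_coalgebra B" using coalg by (simp add: is_coalgebra_def)
  have u: "unit_counit_compat B" by (simp add: unit_counit_compat_def cou_bu cop_one)
  have m: "teq2 sc sc (cop (bu x y))
          (lsum (cop x) (\<lambda>x1 x2. lsum (cop y) (\<lambda>y1 y2. [(bu x1 y1, bu x2 y2)])))" for x y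
    by (rule teq2I) (simp add: cop_bu[OF vs_field])
  have s: "is_antipode B" by (simp add: is_antipode_def Sa_lin antR antL)
  show ?thesis unfolding is_hopf_algebra_def using a c u m s by simp
qed

lemma ydmod: "is_yd_module B sc act rho"
  unfolding is_yd_module_def
  using vs act_bilin P2 rho_add rho_scale rho_coassoc rho_counit YD_cond by simp

lemma ydbimon: "is_yd_bimonoid B A act rho"
  unfolding is_yd_bimonoid_def
  using ydmod alg coalg P1 rho_mul rho_one act_cop cou_act cop_comod rho_cou braided
      ax[unfolded is_ydph_def] by simp

lemma rrb: "is_yd_rrb B A act rho id"
  unfolding is_yd_rrb_def
  using hopfB ydbimon lin_id[of sc] teq2_refl bul_eq[symmetric] RB2 RB3 by (simp add: id_def bij_id[unfolded id_def] teq2_refl)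

end

lemma morph_sub:
  assumes X: "is_ydph A act" and Y: "is_ydph A' act'" and g: "ydph_morph A act A' act' g"
  shows "alg_coalg_morph (sub_hopf A act) (sub_hopf A' act') g"
proof -
  interpret X: ydph A act by (rule ydph.intro[OF X])
  interpret Y: ydph A' act' by (rule ydph.intro[OF Y])
  have acm: "alg_coalg_morph A A' g" and gact: "\<And>x y. g (act x y) = act' (g x) (g y)"
    using g by (auto simp: ydph_morph_def)
  have gl: "lin (h_sc A) (h_sc A') g" and gm: "\<And>x y. g (h_mul A x y) = h_mul A' (g x) (g y)"
    and g1: "g (h_one A) = h_one A'"
    and gc: "\<And>x. teq2 (h_sc A') (h_sc A') (h_cop A' (g x)) (map (\<lambda>(a, b). (g a, g b)) (h_cop A x))"
    and ge: "\<And>x. h_cou A' (g x) = h_cou A x"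
    using acm by (auto simp: alg_coalg_morph_def)
  have "g (bul A act x y) = bul A' act' (g x) (g y)" for x y
  proof -
    have "g (bul A act x y) = ssum (h_cop A x) (\<lambda>a b. h_mul A' (g a) (act' (g b) (g y)))"
      by (simp add: X.bul_eq lin_ssum_outside[OF gl] gm gact)
    also have "\<dots> = ssum (map (\<lambda>(a, b). (g a, g b)) (h_cop A x)) (\<lambda>a b. h_mul A' a (act' b (g y)))"
      by simp
    also have "\<dots> = ssum (h_cop A' (g x)) (\<lambda>a b. h_mul A' a (act' b (g y)))"
      by (rule teq2_transfer[OF Y.vs gc, symmetric]) (simp add: bilin_def)
    also have "\<dots> = bul A' act' (g x) (g y)" by (simp add: Y.bul_eq)
    finally show ?thesis .
  qed
  then show ?thesis using gl g1 gc ge by (simp add: alg_coalg_morph_def sub_hopf_def)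
qed

theorem proposition4:
  fixes A :: "('f::field, 'h::ab_group_add) halg" and act :: "'h \<Rightarrow> 'h \<Rightarrow> 'h"
    and A' :: "('f, 'g::ab_group_add) halg" and act' :: "'g \<Rightarrow> 'g \<Rightarrow> 'g"
    and g :: "'h \<Rightarrow> 'g"
  assumes "is_ydph A act"
  shows "is_yd_rrb (sub_hopf A act) A act (yd_coact A act) id
    \<and> (is_ydph A' act' \<longrightarrow> ydph_morph A act A' act' g \<longrightarrow>
        yd_rrb_morph (sub_hopf A act) A act id (sub_hopf A' act') A' act' id g g)"
proof (intro conjI impI)
  interpret X: ydph A act by (rule ydph.intro[OF assms])
  show "is_yd_rrb (sub_hopf A act) A act (yd_coact A act) id" by (rule X.rrb)
  assume Y: "is_ydph A' act'" and g: "ydph_morph A act A' act' g"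
  show "yd_rrb_morph (sub_hopf A act) A act id (sub_hopf A' act') A' act' id g g"
    unfolding yd_rrb_morph_def using morph_sub[OF assms Y g] g by (simp add: ydph_morph_def)
qed

end
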